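(* Let $f:\mathbb{R}^2\to\mathbb{R}^2$, let $x^*\in\mathbb{R}^2$ with $f(x^* )=0$, and assume $f$ is continuously differentiable on a neighbourhood of $x^*$. Suppose $A=Df(x^* )=V^{-1}\begin{bmatrix}\lambda_1&0\\0&\lambda_2\end{bmatrix}V$ for an invertible $V\in\mathbb{R}^{2\times 2}$ and real numbers $\lambda_1,\lambda_2\neq 0$ with at least one of them positive. Fix $\tau>0$ and $\zeta_1,\zeta_2\in\mathbb{R}$ with $|\zeta_1|<1$, $|\zeta_2|<1$. For $i=1,2$ put $$\epsilon_i=\frac{e^{-\lambda_i\tau}\,(e^{3\lambda_i\tau}-\zeta_i)}{\tau\,(e^{\lambda_i\tau}-1)},\qquad k_i=\begin{cases}0&\text{if }\lambda_i<0,\\ \epsilon_i&\text{if }\lambda_i>0,\end{cases}$$ and $K=V^{-1}\begin{bmatrix}k_1&0\\0&k_2\end{bmatrix}V$. Then $x^*$ is a locally asymptotically stable equilibrium of the controlled system $$\dot x(t)=f(x(t))+K(t)\big(x(t-2\tau)-x(t-\tau)\big),\quad t\ge 0,$$ where $K(t)=0_{2\times 2}$ if $3k\tau\le t<(3k+2)\tau$ and $K(t)=K$ if $(3k+2)\tau\le t<(3k+3)\tau$, $k=0,1,2,\dots$.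
   Context: Since $K(t)=0$ for $t\in[0,2\tau)$, a solution of the controlled system is determined by its initial value $x(0)$. "Locally asymptotically stable" means: for every $\eta>0$ there is $\delta>0$ such that every solution with $\|x(0)-x^*\|<\delta$ is defined for all $t\ge0$ and satisfies $\|x(t)-x^*\|<\eta$ for all $t\ge 0$, and there is $\delta_0>0$ such that $\|x(0)-x^*\|<\delta_0$ implies $x(t)\to x^*$ as $t\to\infty$. *)

theory Defs
  imports "HOL-Analysis.Analysis"
begin

definition diag2 :: "real \<Rightarrow> real \<Rightarrow> real^2^2" where
  "diag2 a b = (\<chi> i j. if i = j then (if i = 1 then a else b) else 0)"

definition ctrl_eps :: "real \<Rightarrow> real \<Rightarrow> real \<Rightarrow> real" where
  "ctrl_eps lam tau zeta =
     exp (- lam * tau) * (exp (3 * lam * tau) - zeta) / (tau * (exp (lam * tau) - 1))"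

definition ctrl_k :: "real \<Rightarrow> real \<Rightarrow> real \<Rightarrow> real" where
  "ctrl_k lam tau zeta = (if lam < 0 then 0 else ctrl_eps lam tau zeta)"

definition ctrl_gain :: "real \<Rightarrow> real^2^2 \<Rightarrow> real \<Rightarrow> real^2^2" where
  "ctrl_gain tau Km t =
     (if \<exists>k::nat. (3 * real k + 2) * tau \<le> t \<and> t < (3 * real k + 3) * tau then Km else 0)"

text \<open>Values of x at negative times never matter since K(t) = 0 for t < 2 tau.\<close>
definition ctrl_solution_on ::
  "(real^2 \<Rightarrow> real^2) \<Rightarrow> real^2^2 \<Rightarrow> real \<Rightarrow> real set \<Rightarrow> (real \<Rightarrow> real^2) \<Rightarrow> bool" where
  "ctrl_solution_on f Km tau I x \<longleftrightarrow>
     continuous_on I x \<and>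
     (\<forall>t\<in>I. ((\<lambda>s. f (x s) + ctrl_gain tau Km s *v (x (s - 2 * tau) - x (s - tau)))
               has_integral (x t - x 0)) {0..t})"

definition ctrl_loc_asym_stable ::
  "(real^2 \<Rightarrow> real^2) \<Rightarrow> real^2^2 \<Rightarrow> real \<Rightarrow> real^2 \<Rightarrow> bool" where
  "ctrl_loc_asym_stable f Km tau xs \<longleftrightarrow>
     (\<forall>eta>0. \<exists>delta>0. \<forall>x0. norm (x0 - xs) < delta \<longrightarrow>
        (\<exists>x. ctrl_solution_on f Km tau {0..} x \<and> x 0 = x0) \<and>
        (\<forall>T x. ctrl_solution_on f Km tau {0..<T} x \<and> x 0 = x0 \<longrightarrow>
                (\<forall>t\<in>{0..<T}. norm (x t - xs) < eta)) \<and>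
        (\<forall>x. ctrl_solution_on f Km tau {0..} x \<and> x 0 = x0 \<longrightarrow>
                (\<forall>t\<ge>0. norm (x t - xs) < eta))) \<and>
     (\<exists>delta0>0. \<forall>x. ctrl_solution_on f Km tau {0..} x \<and> norm (x 0 - xs) < delta0 \<longrightarrow>
        (x \<longlongrightarrow> xs) at_top)"

end

theory Submission
  imports Defs
begin
definition chi :: "real \<Rightarrow> real \<Rightarrow> real" where
  "chi tau s = (if \<exists>k::nat. (3 * real k + 2) * tau \<le> s \<and> s < (3 * real k + 3) * tau then 1 else 0)"

lemma ctrl_gain_chi: "ctrl_gain tau Km s = chi tau s *\<^sub>R Km"
  by (auto simp: ctrl_gain_def chi_def)

lemma chi_zero: "tau > 0 \<Longrightarrow> s < 2 * tau \<Longrightarrow> chi tau s = 0"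
proof -
  assume t: "tau > 0" "s < 2 * tau"
  have "\<not> (3 * real k + 2) * tau \<le> s" for k
  proof -
    have "(3 * real k + 2) * tau \<ge> 2 * tau" using t by (intro mult_right_mono) auto
    thus ?thesis using t by linarith
  qed
  thus ?thesis by (auto simp: chi_def)
qed

lemma chi_one: "tau > 0 \<Longrightarrow> 2 * tau \<le> s \<Longrightarrow> s < 3 * tau \<Longrightarrow> chi tau s = 1"
  unfolding chi_def by (rule if_P, rule exI[of _ 0]) auto

lemma chi_01: "chi tau s = 0 \<or> chi tau s = 1"
  by (simp add: chi_def)

lemma chi_nz: "tau > 0 \<Longrightarrow> chi tau s \<noteq> 0 \<Longrightarrow> s \<ge> 2 * tau"
  using chi_zero by force

lemma chi_abs: "\<bar>chi tau s\<bar> \<le> 1"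
  by (simp add: chi_def)

lemma chi_shift: assumes "tau > 0" "s \<ge> 0" shows "chi tau (s + 3 * tau) = chi tau s"
proof -
  have "(\<exists>k::nat. (3 * real k + 2) * tau \<le> s + 3 * tau \<and> s + 3 * tau < (3 * real k + 3) * tau)
    \<longleftrightarrow> (\<exists>k::nat. (3 * real k + 2) * tau \<le> s \<and> s < (3 * real k + 3) * tau)"
  proof
    assume "\<exists>k::nat. (3 * real k + 2) * tau \<le> s + 3 * tau \<and> s + 3 * tau < (3 * real k + 3) * tau"
    then obtain k :: nat where k: "(3 * real k + 2) * tau \<le> s + 3 * tau" "s + 3 * tau < (3 * real k + 3) * tau" by blast
    have "k \<noteq> 0"
    proof
      assume "k = 0" thus False using k assms by auto
    qed
    then obtain j where j: "k = Suc j" by (cases k) auto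
    show "\<exists>k::nat. (3 * real k + 2) * tau \<le> s \<and> s < (3 * real k + 3) * tau"
      using k by (intro exI[of _ j]) (auto simp: j algebra_simps)
  next
    assume "\<exists>k::nat. (3 * real k + 2) * tau \<le> s \<and> s < (3 * real k + 3) * tau"
    then obtain k :: nat where k: "(3 * real k + 2) * tau \<le> s" "s < (3 * real k + 3) * tau" by blast
    show "\<exists>k::nat. (3 * real k + 2) * tau \<le> s + 3 * tau \<and> s + 3 * tau < (3 * real k + 3) * tau"
      using k by (intro exI[of _ "Suc k"]) (auto simp: algebra_simps)
  qed
  thus ?thesis by (simp add: chi_def)
qed

lemma chi_indicator: "chi tau = indicator (\<Union>k::nat. {(3 * real k + 2) * tau ..< (3 * real k + 3) * tau})"
  by (auto simp: chi_def indicator_def fun_eq_iff)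

lemma chi_meas: "chi tau \<in> borel_measurable borel"
  unfolding chi_indicator by (intro borel_measurable_indicator) auto

lemma chi_integrable:
  fixes w :: "real \<Rightarrow> 'a::euclidean_space"
  assumes "continuous_on {a..b} w"
  shows "(\<lambda>s. chi tau s *\<^sub>R w s) integrable_on {a..b}"
proof -
  have "bounded (w ` {a..b})"
    using compact_imp_bounded[OF compact_continuous_image[OF assms compact_Icc]] .
  then obtain B where B0: "\<forall>s\<in>{a..b}. norm (w s) \<le> B"
    by (auto simp: bounded_iff)
  hence B: "\<And>s. s \<in> {a..b} \<Longrightarrow> norm (w s) \<le> B" by blast
  show ?thesis
  proof (rule measurable_bounded_by_integrable_imp_integrable[where g = "\<lambda>_. B"])
    have "chi tau \<in> borel_measurable (lebesgue_on {a..b})"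
      using chi_meas by (intro measurable_restrict_space1 measurable_completion) simp
    moreover have "w \<in> borel_measurable (lebesgue_on {a..b})"
      by (rule continuous_imp_measurable_on_sets_lebesgue[OF assms]) auto
    ultimately show "(\<lambda>s. chi tau s *\<^sub>R w s) \<in> borel_measurable (lebesgue_on {a..b})"
      by measurable
    show "(\<lambda>_. B) integrable_on {a..b}" by (rule integrable_const_ivl)
    show "norm (chi tau s *\<^sub>R w s) \<le> B" if "s \<in> {a..b}" for s
    proof -
      have "norm (chi tau s *\<^sub>R w s) = \<bar>chi tau s\<bar> * norm (w s)" by simp
      also have "\<dots> \<le> 1 * B" by (rule mult_mono) (use chi_abs B that in auto)
      finally show ?thesis by simp
    qed
    show "{a..b} \<in> sets lebesgue" by simp
  qed
qed

lemma two_neq: "(1::2) \<noteq> 2" by simp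

lemma diag2_mv1: "(diag2 a b *v v) $ 1 = a * v $ 1"
  by (simp add: diag2_def matrix_vector_mult_def sum_2)
lemma diag2_mv2: "(diag2 a b *v v) $ 2 = b * v $ 2"
  by (simp add: diag2_def matrix_vector_mult_def sum_2)

lemma norm2_le: "norm (v::real^2) \<le> \<bar>v$1\<bar> + \<bar>v$2\<bar>"
  using norm_le_l1_cart[of v] by (simp add: sum_2)

lemma norm_diag2: "norm (diag2 a b *v v) \<le> (\<bar>a\<bar> + \<bar>b\<bar>) * norm v"
proof -
  have "norm (diag2 a b *v v) \<le> \<bar>a * v$1\<bar> + \<bar>b * v$2\<bar>"
    using norm2_le[of "diag2 a b *v v"] by (simp add: diag2_mv1 diag2_mv2)
  also have "\<dots> \<le> \<bar>a\<bar> * norm v + \<bar>b\<bar> * norm v"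
    by (intro add_mono) (auto simp: abs_mult intro!: mult_left_mono component_le_norm_cart)
  finally show ?thesis by (simp add: algebra_simps)
qed

lemma norm2_sq: "(norm (v::real^2))\<^sup>2 = (v$1)\<^sup>2 + (v$2)\<^sup>2"
  by (simp add: norm_vec_def L2_set_def sum_2)

lemma vec2_eq: "(v::'a^2) = w \<longleftrightarrow> v$1 = w$1 \<and> v$2 = w$2"
  by (simp add: vec_eq_iff forall_2)

locale per =
  fixes tau l1 l2 k1 k2 :: real
  assumes tau: "tau > 0"
begin

definition integ :: "(real^2 \<Rightarrow> real^2) \<Rightarrow> (real \<Rightarrow> real^2) \<Rightarrow> real \<Rightarrow> real^2" where
  "integ G z s = diag2 l1 l2 *v z s + G (z s)
      + chi tau s *\<^sub>R (diag2 k1 k2 *v (z (s - 2 * tau) - z (s - tau)))"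

definition zsol :: "(real^2 \<Rightarrow> real^2) \<Rightarrow> real set \<Rightarrow> (real \<Rightarrow> real^2) \<Rightarrow> bool" where
  "zsol G I z \<longleftrightarrow> continuous_on I z \<and> (\<forall>t\<in>I. (integ G z has_integral (z t - z 0)) {0..t})"

definition iseg :: "real set \<Rightarrow> bool" where
  "iseg I \<longleftrightarrow> (\<forall>t\<in>I. 0 \<le> t \<and> {0..t} \<subseteq> I)"

definition yl :: "real \<Rightarrow> real \<Rightarrow> real \<Rightarrow> real \<Rightarrow> real" where
  "yl l k c t = exp (l * t) * c + k * (1 - exp (l * tau)) * c * max 0 (t - 2 * tau) * exp (l * (t - 2 * tau))"

definition yh :: "real^2 \<Rightarrow> real \<Rightarrow> real^2" where
  "yh z0 t = yl l1 k1 (z0$1) t *\<^sub>R axis 1 1 + yl l2 k2 (z0$2) t *\<^sub>R axis 2 1"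

lemma yh1: "yh z0 t $ 1 = yl l1 k1 (z0$1) t" by (simp add: yh_def axis_def)
lemma yh2: "yh z0 t $ 2 = yl l2 k2 (z0$2) t" by (simp add: yh_def axis_def)

lemma yl0: "yl l k c 0 = c" using tau by (simp add: yl_def)
lemma yh0: "yh z0 0 = z0" by (simp add: vec2_eq yh1 yh2 yl0)

lemma yl_small: "t \<le> 2 * tau \<Longrightarrow> yl l k c t = exp (l * t) * c" by (simp add: yl_def)

lemma yl_cont: "continuous_on S (yl l k c)"
  unfolding yl_def by (intro continuous_intros)

lemma yh_cont: "continuous_on S (yh z0)"
  unfolding yh_def by (intro continuous_intros yl_cont)

lemma yl_deriv:
  assumes "0 < x" "x < 3 * tau" "x \<noteq> 2 * tau"
  shows "(yl l k c has_real_derivative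
     (l * yl l k c x + chi tau x * (k * (yl l k c (x - 2 * tau) - yl l k c (x - tau))))) (at x)"
proof (cases "x < 2 * tau")
  case True
  have "((\<lambda>t. exp (l * t) * c) has_real_derivative l * (exp (l * x) * c)) (at x)"
    by (auto intro!: derivative_eq_intros)
  hence "((\<lambda>t. exp (l * t) * c) has_real_derivative (l * yl l k c x + chi tau x * (k * (yl l k c (x - 2 * tau) - yl l k c (x - tau))))) (at x)"
    using True tau by (simp add: yl_small chi_zero)
  thus ?thesis
    by (rule has_field_derivative_transform_within_open[where S = "{..<2*tau}"]) (use True in \<open>auto simp: yl_small\<close>)
next
  case False
  hence x2: "x > 2 * tau" using assms by auto
  define K where "K = k * (1 - exp (l * tau)) * c"
  have eq: "yl l k c t = exp (l * t) * c + K * (t - 2 * tau) * exp (l * (t - 2 * tau))" if "t > 2 * tau" for t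
    using that by (simp add: yl_def K_def)
  have "((\<lambda>t. exp (l * t) * c + K * (t - 2 * tau) * exp (l * (t - 2 * tau))) has_real_derivative
      l * (exp (l * x) * c) + K * exp (l * (x - 2 * tau)) + K * (x - 2 * tau) * (l * exp (l * (x - 2 * tau)))) (at x)"
    by (auto intro!: derivative_eq_intros)
  moreover have "l * (exp (l * x) * c) + K * exp (l * (x - 2 * tau)) + K * (x - 2 * tau) * (l * exp (l * (x - 2 * tau)))
     = l * yl l k c x + chi tau x * (k * (yl l k c (x - 2 * tau) - yl l k c (x - tau)))"
  proof -
    have c1: "chi tau x = 1" using x2 assms tau by (intro chi_one) auto
    have e: "exp (l * (x - tau)) = exp (l * (x - 2 * tau)) * exp (l * tau)"
      by (simp add: exp_add[symmetric] algebra_simps)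
    have y1: "yl l k c (x - 2 * tau) = exp (l * (x - 2 * tau)) * c" using assms by (intro yl_small) auto
    have y2: "yl l k c (x - tau) = exp (l * (x - tau)) * c" using assms by (intro yl_small) auto
    show ?thesis unfolding c1 y1 y2 eq[OF x2] e K_def by (simp add: algebra_simps)
  qed
  ultimately have "((\<lambda>t. exp (l * t) * c + K * (t - 2 * tau) * exp (l * (t - 2 * tau))) has_real_derivative
      (l * yl l k c x + chi tau x * (k * (yl l k c (x - 2 * tau) - yl l k c (x - tau))))) (at x)" by simp
  thus ?thesis
    by (rule has_field_derivative_transform_within_open[where S = "{2*tau<..}"]) (use x2 eq in auto)
qed

lemma vd_scale: "(f has_real_derivative d) (at x) \<Longrightarrow> ((\<lambda>t. f t *\<^sub>R v) has_vector_derivative d *\<^sub>R v) (at x)"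
  using has_vector_derivative_scaleR[of f d x UNIV "\<lambda>_. v" 0] has_vector_derivative_const[of v "at x"]
  by simp

lemma integ0_yh: "integ (\<lambda>_. 0) (yh z0) x =
   (l1 * yl l1 k1 (z0$1) x + chi tau x * (k1 * (yl l1 k1 (z0$1) (x - 2 * tau) - yl l1 k1 (z0$1) (x - tau)))) *\<^sub>R axis 1 1
 + (l2 * yl l2 k2 (z0$2) x + chi tau x * (k2 * (yl l2 k2 (z0$2) (x - 2 * tau) - yl l2 k2 (z0$2) (x - tau)))) *\<^sub>R axis 2 1"
  by (simp add: vec2_eq integ_def diag2_mv1 diag2_mv2 yh1 yh2 axis_def algebra_simps)

lemma yh_integral:
  assumes "0 \<le> t" "t \<le> 3 * tau"
  shows "(integ (\<lambda>_. 0) (yh z0) has_integral (yh z0 t - yh z0 0)) {0..t}"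
proof (rule fundamental_theorem_of_calculus_interior_strong[where S = "{2*tau}"])
  show "continuous_on {0..t} (yh z0)" by (rule yh_cont)
  fix x assume x: "x \<in> {0<..<t} - {2 * tau}"
  show "(yh z0 has_vector_derivative integ (\<lambda>_. 0) (yh z0) x) (at x)"
    unfolding integ0_yh yh_def
    by (intro derivative_intros vd_scale yl_deriv)
      (use x assms in auto)
qed (use assms in auto)

definition CL :: "real \<Rightarrow> real \<Rightarrow> real" where
  "CL l k = exp (\<bar>l\<bar> * (3 * tau)) + \<bar>k\<bar> * \<bar>1 - exp (l * tau)\<bar> * tau * exp (\<bar>l\<bar> * tau)"

definition CY :: real where "CY = CL l1 k1 + CL l2 k2"

definition mu :: "real \<Rightarrow> real \<Rightarrow> real" where
  "mu l k = exp (3 * l * tau) + k * (1 - exp (l * tau)) * tau * exp (l * tau)"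

lemma CL_nonneg: "CL l k \<ge> 0" using tau by (simp add: CL_def)
lemma CY_nonneg: "CY \<ge> 0" by (simp add: CY_def add_nonneg_nonneg CL_nonneg)

lemma yl_bound:
  assumes "0 \<le> t" "t \<le> 3 * tau"
  shows "\<bar>yl l k c t\<bar> \<le> CL l k * \<bar>c\<bar>"
proof -
  have a: "\<bar>exp (l * t) * c\<bar> \<le> exp (\<bar>l\<bar> * (3 * tau)) * \<bar>c\<bar>"
  proof -
    have "l * t \<le> \<bar>l\<bar> * (3 * tau)"
    proof -
      have "l * t \<le> \<bar>l\<bar> * t" using assms by (intro mult_right_mono) auto
      also have "\<dots> \<le> \<bar>l\<bar> * (3 * tau)" using assms by (intro mult_left_mono) auto
      finally show ?thesis .
    qed
    thus ?thesis by (simp add: abs_mult mult_right_mono)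
  qed
  have m: "max 0 (t - 2 * tau) * exp (l * (t - 2 * tau)) \<le> tau * exp (\<bar>l\<bar> * tau)"
  proof (cases "t \<le> 2 * tau")
    case True thus ?thesis using tau by simp
  next
    case False
    have "l * (t - 2 * tau) \<le> \<bar>l\<bar> * tau"
    proof -
      have "l * (t - 2 * tau) \<le> \<bar>l\<bar> * (t - 2 * tau)" using False
        by (intro mult_right_mono) auto
      also have "\<dots> \<le> \<bar>l\<bar> * tau" using assms by (intro mult_left_mono) auto
      finally show ?thesis .
    qed
    hence "exp (l * (t - 2 * tau)) \<le> exp (\<bar>l\<bar> * tau)" by simp
    thus ?thesis using False assms by (auto intro!: mult_mono)
  qed
  have b: "\<bar>k * (1 - exp (l * tau)) * c * max 0 (t - 2 * tau) * exp (l * (t - 2 * tau))\<bar>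
      \<le> \<bar>k\<bar> * \<bar>1 - exp (l * tau)\<bar> * tau * exp (\<bar>l\<bar> * tau) * \<bar>c\<bar>"
  proof -
    have "\<bar>k * (1 - exp (l * tau)) * c * max 0 (t - 2 * tau) * exp (l * (t - 2 * tau))\<bar>
        = (\<bar>k\<bar> * \<bar>1 - exp (l * tau)\<bar> * \<bar>c\<bar>) * (max 0 (t - 2 * tau) * exp (l * (t - 2 * tau)))"
      by (simp add: abs_mult)
    also have "\<dots> \<le> (\<bar>k\<bar> * \<bar>1 - exp (l * tau)\<bar> * \<bar>c\<bar>) * (tau * exp (\<bar>l\<bar> * tau))"
      by (intro mult_left_mono m) auto
    finally show ?thesis by (simp add: algebra_simps)
  qed
  have "\<bar>yl l k c t\<bar> \<le> \<bar>exp (l * t) * c\<bar> + \<bar>k * (1 - exp (l * tau)) * c * max 0 (t - 2 * tau) * exp (l * (t - 2 * tau))\<bar>"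
    unfolding yl_def by (rule abs_triangle_ineq)
  also have "\<dots> \<le> exp (\<bar>l\<bar> * (3 * tau)) * \<bar>c\<bar> + \<bar>k\<bar> * \<bar>1 - exp (l * tau)\<bar> * tau * exp (\<bar>l\<bar> * tau) * \<bar>c\<bar>"
    by (rule add_mono[OF a b])
  finally show ?thesis by (simp add: CL_def algebra_simps)
qed

lemma yh_bound:
  assumes "0 \<le> t" "t \<le> 3 * tau"
  shows "norm (yh z0 t) \<le> CY * norm z0"
proof -
  have "norm (yh z0 t) \<le> \<bar>yl l1 k1 (z0$1) t\<bar> + \<bar>yl l2 k2 (z0$2) t\<bar>"
    using norm2_le[of "yh z0 t"] by (simp add: yh1 yh2)
  also have "\<dots> \<le> CL l1 k1 * \<bar>z0$1\<bar> + CL l2 k2 * \<bar>z0$2\<bar>"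
    by (intro add_mono yl_bound assms)
  also have "\<dots> \<le> CL l1 k1 * norm z0 + CL l2 k2 * norm z0"
    by (intro add_mono mult_left_mono CL_nonneg component_le_norm_cart)
  finally show ?thesis by (simp add: CY_def algebra_simps)
qed

lemma yl_3: "yl l k c (3 * tau) = mu l k * c"
  using tau by (simp add: yl_def mu_def algebra_simps)

lemma yh_3:
  assumes "\<bar>mu l1 k1\<bar> \<le> q0" "\<bar>mu l2 k2\<bar> \<le> q0"
  shows "norm (yh z0 (3 * tau)) \<le> q0 * norm z0"
proof -
  have q0: "q0 \<ge> 0" using assms(1) abs_ge_zero[of "mu l1 k1"] by linarith
  have "(norm (yh z0 (3 * tau)))\<^sup>2 = (mu l1 k1 * z0$1)\<^sup>2 + (mu l2 k2 * z0$2)\<^sup>2"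
    by (simp add: norm2_sq yh1 yh2 yl_3)
  also have "\<dots> \<le> q0\<^sup>2 * (z0$1)\<^sup>2 + q0\<^sup>2 * (z0$2)\<^sup>2"
  proof -
    have "(mu l k)\<^sup>2 \<le> q0\<^sup>2" if "\<bar>mu l k\<bar> \<le> q0" for l k
      using power_mono[OF that, of 2] by simp
    hence "(mu l k * x)\<^sup>2 \<le> q0\<^sup>2 * x\<^sup>2" if "\<bar>mu l k\<bar> \<le> q0" for l k x
      using that by (simp add: power_mult_distrib mult_right_mono)
    thus ?thesis using assms by (intro add_mono) auto
  qed
  also have "\<dots> = (q0 * norm z0)\<^sup>2" by (simp add: norm2_sq power_mult_distrib algebra_simps)
  finally have sq: "(norm (yh z0 (3 * tau)))\<^sup>2 \<le> (q0 * norm z0)\<^sup>2" .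
  show ?thesis by (rule power2_le_imp_le[OF sq]) (simp add: q0)
qed

end

lemma exp_integral:
  fixes A B beta t :: real
  assumes "0 \<le> t" "beta > 0"
  shows "((\<lambda>s. A * exp (beta * s) + B) has_integral (A * (exp (beta * t) - 1) / beta + B * t)) {0..t}"
proof -
  have "((\<lambda>s. A * exp (beta * s) + B) has_integral
     ((\<lambda>s. A * exp (beta * s) / beta + B * s) t - (\<lambda>s. A * exp (beta * s) / beta + B * s) 0)) {0..t}"
  proof (rule fundamental_theorem_of_calculus)
    fix x assume "x \<in> {0..t}"
    have "((\<lambda>s. A * exp (beta * s) / beta + B * s) has_real_derivative (A * exp (beta * x) + B)) (at x within {0..t})"
      using assms by (auto intro!: derivative_eq_intros)
    thus "((\<lambda>s. A * exp (beta * s) / beta + B * s) has_vector_derivative (A * exp (beta * x) + B)) (at x within {0..t})"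
      by (simp add: has_real_derivative_iff_has_vector_derivative)
  qed (use assms in auto)
  thus ?thesis using assms by (simp add: diff_divide_distrib right_diff_distrib algebra_simps)
qed

context per begin

definition b0 :: real where "b0 = (\<bar>l1\<bar> + \<bar>l2\<bar>) + 1 + 2 * (\<bar>k1\<bar> + \<bar>k2\<bar>)"
definition beta :: real where "beta = 2 * b0"
definition c1 :: real where "c1 = 6 * tau * CY * exp (beta * (3 * tau))"

lemma b0_pos: "b0 \<ge> 1" by (simp add: b0_def)
lemma beta_pos: "beta > 0" using b0_pos by (simp add: beta_def)
lemma c1_nonneg: "c1 \<ge> 0" using tau CY_nonneg by (simp add: c1_def)

lemma integ_diff: "integ G z s - integ (\<lambda>_. 0) y s = diag2 l1 l2 *v (z s - y s) + G (z s)
   + chi tau s *\<^sub>R (diag2 k1 k2 *v ((z (s - 2 * tau) - y (s - 2 * tau)) - (z (s - tau) - y (s - tau))))"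
  by (simp add: integ_def algebra_simps)

lemma one_period:
  assumes zs: "zsol G I z" and I: "iseg I" and Gb: "\<forall>s\<in>I. norm (G (z s)) \<le> e * norm (z s)"
    and e: "0 \<le> e" "e \<le> 1" and t0: "t0 \<in> I" "t0 \<le> 3 * tau"
  shows "\<forall>t\<in>{0..t0}. norm (z t - yh (z 0) t) \<le> c1 * e * norm (z 0)"
proof -
  define d where "d t = z t - yh (z 0) t" for t
  have sub: "{0..t0} \<subseteq> I" "0 \<le> t0" using I t0 by (auto simp: iseg_def)
  have zc: "continuous_on {0..t0} z" using zs sub by (auto simp: zsol_def intro: continuous_on_subset)
  have dcont: "continuous_on {0..t0} d" unfolding d_def by (intro continuous_intros zc yh_cont)
  define ph where "ph u = exp (- beta * u) * norm (d u)" for u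
  have phc: "continuous_on {0..t0} ph" unfolding ph_def by (intro continuous_intros dcont)
  obtain us where us: "us \<in> {0..t0}" "\<forall>u\<in>{0..t0}. ph u \<le> ph us"
    using continuous_attains_sup[OF compact_Icc _ phc] sub by auto
  define M where "M = ph us"
  have M0: "M \<ge> 0" by (simp add: M_def ph_def)
  have dM: "norm (d u) \<le> M * exp (beta * u)" if "u \<in> {0..t0}" for u
  proof -
    have "ph u \<le> M" using us that by (simp add: M_def)
    hence "exp (beta * u) * ph u \<le> exp (beta * u) * M" by (intro mult_left_mono) auto
    moreover have "exp (beta * u) * ph u = norm (d u)"
      by (simp add: ph_def exp_minus field_simps)
    ultimately show ?thesis by (metis mult.commute)
  qed
  define a where "a = 3 * tau * e * CY * norm (z 0)"
  have a0: "a \<ge> 0" using tau e CY_nonneg by (simp add: a_def)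
  have key: "norm (d t) \<le> M / 2 * exp (beta * t) + a" if t: "t \<in> {0..t0}" for t
  proof -
    have tI: "t \<in> I" using t sub by auto
    have hz: "(integ G z has_integral (z t - z 0)) {0..t}" using zs tI by (auto simp: zsol_def)
    have hy: "(integ (\<lambda>_. 0) (yh (z 0)) has_integral (yh (z 0) t - z 0)) {0..t}"
      using yh_integral[of t "z 0"] t t0 by (simp add: yh0)
    have hd: "((\<lambda>s. integ G z s - integ (\<lambda>_. 0) (yh (z 0)) s) has_integral d t) {0..t}"
      using has_integral_diff[OF hz hy] by (simp add: d_def)
    define g where "g s = b0 * M * exp (beta * s) + e * CY * norm (z 0)" for s
    have gint: "(g has_integral (b0 * M * (exp (beta * t) - 1) / beta + e * CY * norm (z 0) * t)) {0..t}"
      unfolding g_def using exp_integral[of t beta "b0 * M" "e * CY * norm (z 0)"] t beta_pos by simp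
    have bound: "norm (integ G z s - integ (\<lambda>_. 0) (yh (z 0)) s) \<le> g s" if s: "s \<in> {0..t}" for s
    proof -
      have s0: "s \<in> {0..t0}" using s t by auto
      have sI: "s \<in> I" using s0 sub by auto
      have eb: "exp (beta * s) \<ge> 0" by simp
      have Me: "M * exp (beta * s) \<ge> 0" using M0 by simp
      have n1: "norm (diag2 l1 l2 *v d s) \<le> (\<bar>l1\<bar> + \<bar>l2\<bar>) * (M * exp (beta * s))"
        using norm_diag2[of l1 l2 "d s"] dM[OF s0]
        by (meson abs_ge_zero add_nonneg_nonneg mult_left_mono order_trans)
      have n2: "norm (G (z s)) \<le> e * (M * exp (beta * s)) + e * CY * norm (z 0)"
      proof -
        have "norm (z s) \<le> norm (d s) + norm (yh (z 0) s)"
          using norm_triangle_ineq[of "z s - yh (z 0) s" "yh (z 0) s"] by (simp add: d_def)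
        also have "\<dots> \<le> M * exp (beta * s) + CY * norm (z 0)"
          using dM[OF s0] yh_bound[of s "z 0"] s0 t0 by (intro add_mono) auto
        finally have "e * norm (z s) \<le> e * (M * exp (beta * s) + CY * norm (z 0))"
          using e by (intro mult_left_mono) auto
        thus ?thesis using Gb sI by (simp add: algebra_simps) (meson order_trans)
      qed
      have n3: "norm (chi tau s *\<^sub>R (diag2 k1 k2 *v (d (s - 2 * tau) - d (s - tau))))
          \<le> 2 * (\<bar>k1\<bar> + \<bar>k2\<bar>) * (M * exp (beta * s))"
      proof (cases "chi tau s = 0")
        case True thus ?thesis using Me by simp
      next
        case False
        hence c1': "chi tau s = 1" using chi_01 by blast
        have s2: "s \<ge> 2 * tau" using chi_nz[OF tau False] .
        have m1: "s - 2 * tau \<in> {0..t0}" "s - tau \<in> {0..t0}" using s2 s0 tau by auto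
        have e1: "M * exp (beta * (s - 2 * tau)) \<le> M * exp (beta * s)"
          using M0 beta_pos tau by (intro mult_left_mono) auto
        have e2: "M * exp (beta * (s - tau)) \<le> M * exp (beta * s)"
          using M0 beta_pos tau by (intro mult_left_mono) auto
        have "norm (d (s - 2 * tau) - d (s - tau)) \<le> norm (d (s - 2 * tau)) + norm (d (s - tau))"
          by (rule norm_triangle_ineq4)
        also have "\<dots> \<le> 2 * (M * exp (beta * s))"
          using dM[OF m1(1)] dM[OF m1(2)] e1 e2 by simp
        finally have "norm (diag2 k1 k2 *v (d (s - 2 * tau) - d (s - tau))) \<le> (\<bar>k1\<bar> + \<bar>k2\<bar>) * (2 * (M * exp (beta * s)))"
          using norm_diag2[of k1 k2 "d (s - 2 * tau) - d (s - tau)"]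
          by (meson abs_ge_zero add_nonneg_nonneg mult_left_mono order_trans)
        thus ?thesis by (simp add: c1' algebra_simps)
      qed
      have "norm (integ G z s - integ (\<lambda>_. 0) (yh (z 0)) s)
         \<le> norm (diag2 l1 l2 *v d s) + norm (G (z s)) + norm (chi tau s *\<^sub>R (diag2 k1 k2 *v (d (s - 2 * tau) - d (s - tau))))"
        unfolding integ_diff d_def[symmetric] by (intro norm_triangle_le add_mono norm_triangle_ineq order_refl)
      also have "\<dots> \<le> (\<bar>l1\<bar> + \<bar>l2\<bar>) * (M * exp (beta * s)) + (e * (M * exp (beta * s)) + e * CY * norm (z 0))
           + 2 * (\<bar>k1\<bar> + \<bar>k2\<bar>) * (M * exp (beta * s))"
        by (intro add_mono n1 n2 n3)
      also have "\<dots> \<le> g s"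
      proof -
        have "e * (M * exp (beta * s)) \<le> 1 * (M * exp (beta * s))" using e Me by (intro mult_right_mono) auto
        thus ?thesis by (simp add: g_def b0_def algebra_simps)
      qed
      finally show ?thesis .
    qed
    have "norm (d t) \<le> b0 * M * (exp (beta * t) - 1) / beta + e * CY * norm (z 0) * t"
    proof -
      have "norm (integral {0..t} (\<lambda>s. integ G z s - integ (\<lambda>_. 0) (yh (z 0)) s)) \<le> integral {0..t} g"
        by (rule integral_norm_bound_integral) (use hd gint bound in auto)
      thus ?thesis using integral_unique[OF hd] integral_unique[OF gint] by simp
    qed
    also have "\<dots> \<le> M / 2 * exp (beta * t) + a"
    proof -
      have "b0 * M * (exp (beta * t) - 1) / beta = M / 2 * (exp (beta * t) - 1)"
        using b0_pos by (simp add: beta_def field_simps)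
      also have "\<dots> \<le> M / 2 * exp (beta * t)" using M0 by (simp add: algebra_simps)
      finally have 1: "b0 * M * (exp (beta * t) - 1) / beta \<le> M / 2 * exp (beta * t)" .
      have "e * CY * norm (z 0) * t \<le> e * CY * norm (z 0) * (3 * tau)"
        using t t0 e CY_nonneg by (intro mult_left_mono) auto
      hence 2: "e * CY * norm (z 0) * t \<le> a" by (simp add: a_def algebra_simps)
      show ?thesis using add_mono[OF 1 2] by simp
    qed
    finally show ?thesis .
  qed
  have M2a: "M \<le> 2 * a"
  proof -
    have "M = exp (- beta * us) * norm (d us)" by (simp add: M_def ph_def)
    also have "\<dots> \<le> exp (- beta * us) * (M / 2 * exp (beta * us) + a)"
      using key[OF us(1)] by (intro mult_left_mono) auto
    also have "\<dots> = M / 2 + exp (- beta * us) * a"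
      by (simp add: algebra_simps exp_minus field_simps)
    also have "\<dots> \<le> M / 2 + a"
    proof -
      have "exp (- beta * us) \<le> 1" using beta_pos us by (simp add: mult_nonneg_nonneg)
      thus ?thesis using a0 by (simp add: mult_left_le_one_le)
    qed
    finally show ?thesis by simp
  qed
  show ?thesis
  proof
    fix t assume t: "t \<in> {0..t0}"
    have "norm (d t) \<le> M * exp (beta * t)" by (rule dM[OF t])
    also have "\<dots> \<le> (2 * a) * exp (beta * (3 * tau))"
      using M2a M0 t t0 beta_pos by (intro mult_mono) auto
    also have "\<dots> = c1 * e * norm (z 0)" by (simp add: a_def c1_def algebra_simps)
    finally show "norm (z t - yh (z 0) t) \<le> c1 * e * norm (z 0)" by (simp add: d_def)
  qed
qed

end

context per begin

lemma zsol_shift: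
  assumes zs: "zsol G I z" and I: "iseg I" and T: "3 * tau \<in> I"
  shows "zsol G {s. 0 \<le> s \<and> s + 3 * tau \<in> I} (\<lambda>s. z (s + 3 * tau))"
    and "iseg {s. 0 \<le> s \<and> s + 3 * tau \<in> I}"
proof -
  let ?I = "{s. 0 \<le> s \<and> s + 3 * tau \<in> I}"
  let ?w = "\<lambda>s. z (s + 3 * tau)"
  show "iseg ?I"
    unfolding iseg_def
  proof safe
    fix t u assume "0 \<le> t" "t + 3 * tau \<in> I" "u \<in> {0..t}"
    moreover hence "{0..t + 3 * tau} \<subseteq> I" using I by (auto simp: iseg_def)
    ultimately show "0 \<le> u" "u + 3 * tau \<in> I" using tau by auto
  qed
  have zc: "continuous_on I z" using zs by (simp add: zsol_def)
  have "continuous_on ?I ?w"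
    by (rule continuous_on_compose2[OF zc]) (auto intro!: continuous_intros)
  moreover have "(integ G ?w has_integral (?w t - ?w 0)) {0..t}" if t: "t \<in> ?I" for t
  proof -
    have t0: "0 \<le> t" "t + 3 * tau \<in> I" using t by auto
    have h1: "(integ G z has_integral (z (t + 3 * tau) - z 0)) {0..t + 3 * tau}"
      using zs t0 by (simp add: zsol_def)
    have h2: "(integ G z has_integral (z (3 * tau) - z 0)) {0..3 * tau}"
      using zs T by (simp add: zsol_def)
    have int3: "integ G z integrable_on {3 * tau..t + 3 * tau}"
      using integrable_subinterval_real[OF has_integral_integrable[OF h1], of "3 * tau" "t + 3 * tau"] t0 tau by auto
    have comb: "integral {0..3 * tau} (integ G z) + integral {3 * tau..t + 3 * tau} (integ G z) = integral {0..t + 3 * tau} (integ G z)"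
      by (rule Henstock_Kurzweil_Integration.integral_combine) (use t0 tau has_integral_integrable[OF h1] in auto)
    have "integral {3 * tau..t + 3 * tau} (integ G z) = integral {0..t + 3 * tau} (integ G z) - integral {0..3 * tau} (integ G z)"
      using comb by (simp add: eq_diff_eq add.commute)
    also have "\<dots> = (z (t + 3 * tau) - z 0) - (z (3 * tau) - z 0)"
      using integral_unique[OF h1] integral_unique[OF h2] by simp
    also have "\<dots> = z (t + 3 * tau) - z (3 * tau)" by simp
    finally have "integral {3 * tau..t + 3 * tau} (integ G z) = z (t + 3 * tau) - z (3 * tau)" .
    hence h3: "(integ G z has_integral (z (t + 3 * tau) - z (3 * tau))) {0 + 3 * tau..t + 3 * tau}"
      using integrable_integral[OF int3] by simp
    have h4: "((integ G z \<circ> (+) (3 * tau)) has_integral (z (t + 3 * tau) - z (3 * tau))) {0..t}"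
      using has_integral_shift_Icc_real[of "integ G z" "3 * tau" _ 0 t] h3 by simp
    have "(integ G ?w has_integral (z (t + 3 * tau) - z (3 * tau))) {0..t}"
    proof (rule has_integral_eq[OF _ h4])
      fix s assume s: "s \<in> {0..t}"
      have "chi tau (3 * tau + s) = chi tau s" using chi_shift[of tau s] tau s by (simp add: add.commute)
      moreover have "3 * tau + s - 2 * tau = s - 2 * tau + 3 * tau" "3 * tau + s - tau = s - tau + 3 * tau"
        by simp_all
      ultimately show "(integ G z \<circ> (+) (3 * tau)) s = integ G ?w s"
        by (simp add: integ_def add.commute)
    qed
    thus ?thesis by simp
  qed
  ultimately show "zsol G ?I ?w" by (simp add: zsol_def)
qed

definition q0 :: real where "q0 = max \<bar>mu l1 k1\<bar> \<bar>mu l2 k2\<bar>"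
definition e0 :: real where "e0 = min 1 ((1 - q0) / (2 * (c1 + 1)))"
definition qq :: real where "qq = q0 + c1 * e0"
definition CC :: real where "CC = CY + c1 + 1"

lemma CC_ge: "CC \<ge> 1" using CY_nonneg c1_nonneg by (simp add: CC_def)

context
  assumes mus: "\<bar>mu l1 k1\<bar> < 1" "\<bar>mu l2 k2\<bar> < 1"
begin

lemma q0_lt: "q0 < 1" using mus by (simp add: q0_def)
lemma q0_ge: "q0 \<ge> 0" by (simp add: q0_def le_max_iff_disj)
lemma e0_pos: "e0 > 0" using q0_lt c1_nonneg by (simp add: e0_def)
lemma e0_le: "e0 \<le> 1" by (simp add: e0_def)
lemma qq_ge: "qq \<ge> 0" using q0_ge c1_nonneg e0_pos by (simp add: qq_def)
lemma qq_lt: "qq < 1"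
proof -
  have "c1 * e0 \<le> c1 * ((1 - q0) / (2 * (c1 + 1)))"
    using c1_nonneg by (intro mult_left_mono) (auto simp: e0_def)
  also have "\<dots> \<le> (1 - q0) / 2"
  proof -
    have "c1 * ((1 - q0) / (2 * (c1 + 1))) = (1 - q0) / 2 * (c1 / (c1 + 1))"
      using c1_nonneg by (simp add: field_simps)
    also have "\<dots> \<le> (1 - q0) / 2 * 1"
      using c1_nonneg q0_lt by (intro mult_left_mono) auto
    finally show ?thesis by simp
  qed
  finally show ?thesis using q0_lt by (simp add: qq_def)
qed

lemma period:
  assumes zs: "zsol G I z" and I: "iseg I" and Gb: "\<forall>s\<in>I. norm (G (z s)) \<le> e * norm (z s)"
    and e: "0 \<le> e" "e \<le> e0"
  shows "t \<in> I \<Longrightarrow> t \<le> 3 * tau \<Longrightarrow> norm (z t) \<le> CC * norm (z 0)"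
    and "3 * tau \<in> I \<Longrightarrow> norm (z (3 * tau)) \<le> qq * norm (z 0)"
proof -
  have e1: "e \<le> 1" using e e0_le by linarith
  have ce: "c1 * e * norm (z 0) \<le> c1 * e0 * norm (z 0)"
    using c1_nonneg e by (intro mult_right_mono mult_left_mono) auto
  have ce1: "c1 * e0 * norm (z 0) \<le> c1 * norm (z 0)"
    unfolding mult.assoc using c1_nonneg e0_le e0_pos by (intro mult_left_mono mult_left_le_one_le) auto
  {
    assume t: "t \<in> I" "t \<le> 3 * tau"
    have t0: "0 \<le> t" using I t by (auto simp: iseg_def)
    have d: "norm (z t - yh (z 0) t) \<le> c1 * e * norm (z 0)"
      using one_period[OF zs I Gb e(1) e1 t] t0 by auto
    have "norm (z t) \<le> norm (yh (z 0) t) + norm (z t - yh (z 0) t)"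
      using norm_triangle_ineq[of "yh (z 0) t" "z t - yh (z 0) t"] by simp
    also have "\<dots> \<le> CY * norm (z 0) + c1 * norm (z 0)"
      using yh_bound[OF t0 t(2)] d ce ce1 by (intro add_mono) auto
    also have "\<dots> \<le> CC * norm (z 0)" by (simp add: CC_def algebra_simps)
    finally show "norm (z t) \<le> CC * norm (z 0)" .
  }
  {
    assume t: "3 * tau \<in> I"
    have d: "norm (z (3 * tau) - yh (z 0) (3 * tau)) \<le> c1 * e * norm (z 0)"
      using one_period[OF zs I Gb e(1) e1 t] tau by auto
    have "norm (z (3 * tau)) \<le> norm (yh (z 0) (3 * tau)) + norm (z (3 * tau) - yh (z 0) (3 * tau))"
      using norm_triangle_ineq[of "yh (z 0) (3 * tau)" "z (3 * tau) - yh (z 0) (3 * tau)"] by simp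
    also have "\<dots> \<le> q0 * norm (z 0) + c1 * e0 * norm (z 0)"
      using yh_3[of q0 "z 0"] d ce by (intro add_mono) (auto simp: q0_def)
    also have "\<dots> = qq * norm (z 0)" by (simp add: qq_def algebra_simps)
    finally show "norm (z (3 * tau)) \<le> qq * norm (z 0)" .
  }
qed

lemma apriori_n:
  assumes e: "0 \<le> e" "e \<le> e0"
  shows "\<forall>z I t. zsol G I z \<longrightarrow> iseg I \<longrightarrow> (\<forall>s\<in>I. norm (G (z s)) \<le> e * norm (z s)) \<longrightarrow>
     t \<in> I \<longrightarrow> 3 * real n * tau \<le> t \<longrightarrow> t < 3 * real (Suc n) * tau \<longrightarrow> norm (z t) \<le> CC * qq ^ n * norm (z 0)"
proof (induction n)
  case 0
  show ?case using period(1)[OF _ _ _ e] by auto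
next
  case (Suc n)
  show ?case
  proof (intro allI impI)
    fix z I t
    assume zs: "zsol G I z" and I: "iseg I" and Gb: "\<forall>s\<in>I. norm (G (z s)) \<le> e * norm (z s)"
      and t: "t \<in> I" "3 * real (Suc n) * tau \<le> t" "t < 3 * real (Suc (Suc n)) * tau"
    have "3 * real (Suc n) * tau = 3 * real n * tau + 3 * tau" by (simp add: algebra_simps)
    moreover have "0 \<le> 3 * real n * tau" using tau by simp
    ultimately have "3 * tau \<le> t" using t by linarith
    moreover have "{0..t} \<subseteq> I" using I t by (auto simp: iseg_def)
    ultimately have T: "3 * tau \<in> I" using tau by auto
    let ?I = "{s. 0 \<le> s \<and> s + 3 * tau \<in> I}"
    let ?w = "\<lambda>s. z (s + 3 * tau)"
    have ws: "zsol G ?I ?w" "iseg ?I" using zsol_shift[OF zs I T] by auto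
    have Gw: "\<forall>s\<in>?I. norm (G (?w s)) \<le> e * norm (?w s)" using Gb by auto
    have tw: "t - 3 * tau \<in> ?I" "3 * real n * tau \<le> t - 3 * tau" "t - 3 * tau < 3 * real (Suc n) * tau"
      using t \<open>3 * tau \<le> t\<close> by (auto simp: algebra_simps)
    have "norm (?w (t - 3 * tau)) \<le> CC * qq ^ n * norm (?w 0)"
      using Suc.IH ws Gw tw by blast
    hence "norm (z t) \<le> CC * qq ^ n * norm (z (3 * tau))" by simp
    also have "\<dots> \<le> CC * qq ^ n * (qq * norm (z 0))"
      using period(2)[OF zs I Gb e T] CC_ge qq_ge by (intro mult_left_mono) auto
    finally show "norm (z t) \<le> CC * qq ^ Suc n * norm (z 0)" by (simp add: algebra_simps)
  qed
qed

lemma floor_period: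
  assumes "0 \<le> t"
  shows "3 * real (nat \<lfloor>t / (3 * tau)\<rfloor>) * tau \<le> t \<and> t < 3 * real (Suc (nat \<lfloor>t / (3 * tau)\<rfloor>)) * tau"
proof -
  let ?x = "t / (3 * tau)"
  have x0: "?x \<ge> 0" using assms tau by simp
  have f: "real (nat \<lfloor>?x\<rfloor>) = of_int \<lfloor>?x\<rfloor>" using x0 by simp
  have a: "of_int \<lfloor>?x\<rfloor> \<le> ?x" "?x < of_int \<lfloor>?x\<rfloor> + 1" by linarith+
  have xt: "?x * (3 * tau) = t" using tau by simp
  have "of_int \<lfloor>?x\<rfloor> * (3 * tau) \<le> ?x * (3 * tau)" using a tau by (intro mult_right_mono) auto
  moreover have "?x * (3 * tau) < (of_int \<lfloor>?x\<rfloor> + 1) * (3 * tau)" using a tau by (intro mult_strict_right_mono) auto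
  ultimately have "of_int \<lfloor>?x\<rfloor> * (3 * tau) \<le> t" "t < (of_int \<lfloor>?x\<rfloor> + 1) * (3 * tau)"
    unfolding xt by auto
  thus ?thesis using f by (simp add: algebra_simps)
qed

lemma apriori:
  assumes zs: "zsol G I z" and I: "iseg I" and Gb: "\<forall>s\<in>I. norm (G (z s)) \<le> e * norm (z s)"
    and e: "0 \<le> e" "e \<le> e0" and t: "t \<in> I"
  shows "norm (z t) \<le> CC * qq ^ (nat \<lfloor>t / (3 * tau)\<rfloor>) * norm (z 0)"
proof -
  have "0 \<le> t" using I t by (auto simp: iseg_def)
  thus ?thesis using apriori_n[OF e, of G "nat \<lfloor>t / (3 * tau)\<rfloor>"] zs I Gb t floor_period by blast
qed

lemma apriori_C:
  assumes zs: "zsol G I z" and I: "iseg I" and Gb: "\<forall>s\<in>I. norm (G (z s)) \<le> e * norm (z s)"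
    and e: "0 \<le> e" "e \<le> e0" and t: "t \<in> I"
  shows "norm (z t) \<le> CC * norm (z 0)"
proof -
  have "CC * qq ^ (nat \<lfloor>t / (3 * tau)\<rfloor>) * norm (z 0) \<le> CC * 1 * norm (z 0)"
    using qq_ge qq_lt CC_ge by (intro mult_right_mono mult_left_mono power_le_one) auto
  thus ?thesis using apriori[OF assms] by simp
qed

lemma apriori_lim:
  assumes zs: "zsol G {0..} z" and Gb: "\<forall>s\<in>{0..}. norm (G (z s)) \<le> e * norm (z s)"
    and e: "0 \<le> e" "e \<le> e0"
  shows "(z \<longlongrightarrow> 0) at_top"
proof -
  have I: "iseg {0..}" by (auto simp: iseg_def)
  show ?thesis
  proof (rule tendstoI)
    fix eps :: real assume eps: "eps > 0"
    have "(\<lambda>n. CC * norm (z 0) * qq ^ n) \<longlonglongrightarrow> CC * norm (z 0) * 0"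
      by (intro tendsto_mult tendsto_const LIMSEQ_power_zero) (use qq_ge qq_lt in auto)
    then obtain N where N: "\<And>n. n \<ge> N \<Longrightarrow> dist (CC * norm (z 0) * qq ^ n) 0 < eps"
      using eps by (auto simp: lim_sequentially)
    show "\<forall>\<^sub>F t in at_top. dist (z t) 0 < eps"
    proof (rule eventually_at_top_linorderI[of "3 * real N * tau"])
      fix t assume t: "t \<ge> 3 * real N * tau"
      have t0: "t \<ge> 0" using t tau by (meson order_trans mult_nonneg_nonneg of_nat_0_le_iff zero_le_numeral less_imp_le)
      let ?n = "nat \<lfloor>t / (3 * tau)\<rfloor>"
      have "N \<le> ?n"
      proof -
        have "real N \<le> t / (3 * tau)" using t tau by (simp add: pos_le_divide_eq algebra_simps)
        thus ?thesis by (simp add: le_nat_floor)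
      qed
      have "norm (z t) \<le> CC * qq ^ ?n * norm (z 0)" using apriori[OF zs I Gb e] t0 by simp
      also have "\<dots> < eps" using N[OF \<open>N \<le> ?n\<close>] CC_ge by (simp add: algebra_simps)
      finally show "dist (z t) 0 < eps" by simp
    qed
  qed
qed

lemma ball_bound:
  assumes zs: "zsol G I z" and I: "iseg I" and Gb: "\<forall>w. norm w \<le> r \<longrightarrow> norm (G w) \<le> e * norm w"
    and e: "0 \<le> e" "e \<le> e0" and small: "CC * norm (z 0) < r"
  shows "\<forall>t\<in>I. norm (z t) < r"
proof (rule ccontr)
  assume "\<not> (\<forall>t\<in>I. norm (z t) < r)"
  then obtain t where t: "t \<in> I" "r \<le> norm (z t)" by force
  have sub: "{0..t} \<subseteq> I" "0 \<le> t" using I t by (auto simp: iseg_def)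
  have zc: "continuous_on {0..t} z" using zs sub by (auto simp: zsol_def intro: continuous_on_subset)
  define B where "B = {s \<in> {0..t}. r \<le> norm (z s)}"
  have Bc: "closed B" unfolding B_def
    by (intro continuous_on_closed_Collect_le continuous_intros zc)
  have "compact ({0..t} \<inter> B)" by (rule compact_Int_closed[OF compact_Icc Bc])
  moreover have "{0..t} \<inter> B = B" by (auto simp: B_def)
  ultimately have "compact B" by simp
  moreover have "B \<noteq> {}" using t sub by (auto simp: B_def)
  ultimately obtain t1 where t1: "t1 \<in> B" "\<forall>s\<in>B. t1 \<le> s"
    using continuous_attains_inf[of B "\<lambda>x. x"] by (auto intro: continuous_intros)
  have z0r: "norm (z 0) < r"
  proof -
    have "norm (z 0) \<le> CC * norm (z 0)" using CC_ge by (simp add: mult_le_cancel_right1)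
    thus ?thesis using small by linarith
  qed
  have t1pos: "t1 > 0"
  proof -
    have "t1 \<ge> 0" "t1 \<noteq> 0" using t1(1) z0r by (auto simp: B_def)
    thus ?thesis by simp
  qed
  let ?I = "{0..<t1}"
  have t1t: "t1 \<le> t" using t1 by (auto simp: B_def)
  have I1: "iseg ?I" by (auto simp: iseg_def)
  have I1sub: "?I \<subseteq> I" using sub t1t by auto
  have zs1: "zsol G ?I z"
    using zs I1sub unfolding zsol_def by (auto intro: continuous_on_subset)
  have Gb1: "\<forall>s\<in>?I. norm (G (z s)) \<le> e * norm (z s)"
  proof
    fix s assume s: "s \<in> ?I"
    have "s \<notin> B" using t1 s by force
    hence "norm (z s) < r" using s t1t by (auto simp: B_def)
    thus "norm (G (z s)) \<le> e * norm (z s)" using Gb by auto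
  qed
  have bnd: "\<forall>s\<in>?I. norm (z s) \<le> CC * norm (z 0)"
    using apriori_C[OF zs1 I1 Gb1 e] by blast
  have "closure ?I \<subseteq> {s \<in> {0..t1}. norm (z s) \<le> CC * norm (z 0)}"
  proof (rule closure_minimal)
    show "?I \<subseteq> {s \<in> {0..t1}. norm (z s) \<le> CC * norm (z 0)}" using bnd by auto
    show "closed {s \<in> {0..t1}. norm (z s) \<le> CC * norm (z 0)}"
      using t1t by (intro continuous_on_closed_Collect_le continuous_intros continuous_on_subset[OF zc]) auto?
  qed
  moreover have "t1 \<in> closure ?I" using t1pos by simp
  ultimately have "t1 \<in> {s \<in> {0..t1}. norm (z s) \<le> CC * norm (z 0)}" by blast
  hence "norm (z t1) \<le> CC * norm (z 0)" by simp
  moreover have "r \<le> norm (z t1)" using t1 by (auto simp: B_def)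
  ultimately show False using small by linarith
qed

end

end

lemma cont_mv[continuous_intros]:
  "continuous_on S f \<Longrightarrow> continuous_on S (\<lambda>x. (A::real^'n^'m) *v f x)"
  by (rule bounded_linear.continuous_on[OF matrix_vector_mul_bounded_linear])

lemma exp_lin_bound:
  fixes beta t :: real
  assumes "beta > 0" "t \<ge> 0"
  shows "t * exp (- beta * t) \<le> 1 / beta"
proof -
  have "beta * t \<le> exp (beta * t)"
    using exp_ge_add_one_self[of "beta * t"] by linarith
  hence "beta * t * exp (- beta * t) \<le> exp (beta * t) * exp (- beta * t)"
    by (intro mult_right_mono) auto
  also have "\<dots> = 1" by (simp add: exp_minus field_simps)
  finally show ?thesis using assms by (simp add: field_simps mult.assoc)
qed

lemma cont_UNIV_local:
  fixes f :: "real \<Rightarrow> 'a::topological_space"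
  assumes "\<And>T. T > 0 \<Longrightarrow> continuous_on {-T..T} f"
  shows "continuous_on UNIV f"
proof -
  have "isCont f x" for x
  proof -
    let ?T = "\<bar>x\<bar> + 1"
    have "continuous_on {-?T<..<?T} f" using assms[of ?T] by (rule continuous_on_subset) auto
    moreover have "x \<in> {-?T<..<?T}" by auto
    ultimately show ?thesis using continuous_on_eq_continuous_at[of "{-?T<..<?T}" f] by auto
  qed
  thus ?thesis by (simp add: continuous_on_eq_continuous_at)
qed

context per begin

lemma integ_integrable:
  assumes "continuous_on UNIV x" "continuous_on UNIV G"
  shows "integ G x integrable_on {a..b}"
proof -
  have "(\<lambda>s. diag2 l1 l2 *v x s + G (x s)) integrable_on {a..b}"
    by (intro integrable_continuous_real continuous_intros continuous_on_compose2[OF assms(2)]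
        continuous_on_subset[OF assms(1)]) auto
  moreover have "(\<lambda>s. chi tau s *\<^sub>R (diag2 k1 k2 *v (x (s - 2 * tau) - x (s - tau)))) integrable_on {a..b}"
    by (intro chi_integrable continuous_intros continuous_on_compose2[OF assms(1)]) auto
  ultimately show ?thesis unfolding integ_def by (rule integrable_add)
qed

lemma existence:
  assumes Lip: "\<And>x y. norm (G x - G y) \<le> L * norm (x - y)" and L: "0 \<le> L"
  shows "\<exists>z. zsol G {0..} z \<and> z 0 = z0"
proof -
  define b1 where "b1 = (\<bar>l1\<bar> + \<bar>l2\<bar>) + L + 2 * (\<bar>k1\<bar> + \<bar>k2\<bar>) + 1"
  define be where "be = 2 * b1"
  have b1: "b1 \<ge> 1" using L by (simp add: b1_def)
  have be: "be > 0" using b1 by (simp add: be_def)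
  have Gc: "continuous_on UNIV G"
  proof (rule continuous_onI)
    fix x :: "real^2" and e :: real assume "e > 0"
    show "\<exists>d>0. \<forall>x'\<in>UNIV. dist x' x < d \<longrightarrow> dist (G x') (G x) \<le> e"
    proof (intro exI[of _ "e / (L + 1)"] conjI ballI impI)
      show "e / (L + 1) > 0" using \<open>e > 0\<close> L by simp
      fix x' assume "dist x' x < e / (L + 1)"
      hence "(L + 1) * dist x' x \<le> e" using L by (simp add: field_simps)
      moreover have "dist (G x') (G x) \<le> L * dist x' x" using Lip[of x' x] by (simp add: dist_norm)
      moreover have "L * dist x' x \<le> (L + 1) * dist x' x" by (simp add: algebra_simps)
      ultimately show "dist (G x') (G x) \<le> e" by linarith
    qed
  qed
  define X where "X u t = exp (be * max 0 t) *\<^sub>R apply_bcontfun u t" for u :: "(real \<Rightarrow>\<^sub>C (real^2))" and t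
  define F where "F u t = exp (- be * max 0 t) *\<^sub>R (z0 + integral {0..max 0 t} (integ G (X u)))" for u t
  have Xc: "continuous_on UNIV (X u)" for u unfolding X_def by (intro continuous_intros) auto
  have hint: "integ G (X u) integrable_on {a..b}" for u a b by (rule integ_integrable[OF Xc Gc])
  have Fc: "continuous_on UNIV (F u)" for u
  proof (rule cont_UNIV_local)
    fix T :: real assume T: "T > 0"
    have "continuous_on {-T..T} (\<lambda>t. integral {0..max 0 t} (integ G (X u)))"
      by (rule continuous_on_compose2[OF indefinite_integral_continuous_1[OF hint[of u 0 T]]])
         (auto intro!: continuous_intros)
    thus "continuous_on {-T..T} (F u)" unfolding F_def by (intro continuous_intros)
  qed
  have Xdiff: "norm (X u s - X v s) \<le> exp (be * s) * dist u v" if "s \<ge> 0" for u v s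
  proof -
    have "norm (X u s - X v s) = exp (be * s) * norm (apply_bcontfun u s - apply_bcontfun v s)"
      using that by (simp add: X_def scaleR_diff_right[symmetric])
    also have "\<dots> \<le> exp (be * s) * dist u v"
      using dist_bounded[of u s v] by (intro mult_left_mono) (auto simp: dist_norm)
    finally show ?thesis .
  qed
  have Xdiff': "norm (X u s - X v s) \<le> exp (be * t) * dist u v" if "s \<le> t" "t \<ge> 0" for u v s t
  proof -
    have "norm (X u s - X v s) = exp (be * max 0 s) * norm (apply_bcontfun u s - apply_bcontfun v s)"
      by (simp add: X_def scaleR_diff_right[symmetric])
    also have "\<dots> \<le> exp (be * t) * dist u v"
      using dist_bounded[of u s v] that be by (intro mult_mono) (auto simp: dist_norm)
    finally show ?thesis .
  qed
  have hdiff: "norm (integ G (X u) s - integ G (X v) s) \<le> b1 * dist u v * exp (be * s)" if s: "s \<ge> 0" for u v s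
  proof -
    have eq: "integ G (X u) s - integ G (X v) s = diag2 l1 l2 *v (X u s - X v s) + (G (X u s) - G (X v s))
       + chi tau s *\<^sub>R (diag2 k1 k2 *v ((X u (s - 2 * tau) - X v (s - 2 * tau)) - (X u (s - tau) - X v (s - tau))))"
      by (simp add: integ_def algebra_simps)
    let ?D = "exp (be * s) * dist u v"
    have D0: "?D \<ge> 0" by simp
    have n1: "norm (diag2 l1 l2 *v (X u s - X v s)) \<le> (\<bar>l1\<bar> + \<bar>l2\<bar>) * ?D"
      using norm_diag2[of l1 l2 "X u s - X v s"] Xdiff[OF s, of u v]
      by (meson abs_ge_zero add_nonneg_nonneg mult_left_mono order_trans)
    have n2: "norm (G (X u s) - G (X v s)) \<le> L * ?D"
      using Lip[of "X u s" "X v s"] Xdiff[OF s, of u v] L by (meson mult_left_mono order_trans)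
    have n3: "norm (chi tau s *\<^sub>R (diag2 k1 k2 *v ((X u (s - 2 * tau) - X v (s - 2 * tau)) - (X u (s - tau) - X v (s - tau)))))
        \<le> 2 * (\<bar>k1\<bar> + \<bar>k2\<bar>) * ?D"
    proof -
      have "norm ((X u (s - 2 * tau) - X v (s - 2 * tau)) - (X u (s - tau) - X v (s - tau)))
          \<le> norm (X u (s - 2 * tau) - X v (s - 2 * tau)) + norm (X u (s - tau) - X v (s - tau))"
        by (rule norm_triangle_ineq4)
      also have "\<dots> \<le> ?D + ?D" using Xdiff'[of _ s] s tau by (intro add_mono) auto
      finally have "norm (diag2 k1 k2 *v ((X u (s - 2 * tau) - X v (s - 2 * tau)) - (X u (s - tau) - X v (s - tau))))
          \<le> (\<bar>k1\<bar> + \<bar>k2\<bar>) * (?D + ?D)"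
        using norm_diag2[of k1 k2] by (meson abs_ge_zero add_nonneg_nonneg mult_left_mono order_trans)
      moreover have "norm (chi tau s *\<^sub>R w) \<le> norm w" for w :: "real^2"
        using chi_abs[of tau s] by (simp add: mult_left_le_one_le)
      ultimately show ?thesis by (metis (no_types, lifting) order_trans mult.assoc mult_2 distrib_left)
    qed
    have "norm (integ G (X u) s - integ G (X v) s) \<le> (\<bar>l1\<bar> + \<bar>l2\<bar>) * ?D + L * ?D + 2 * (\<bar>k1\<bar> + \<bar>k2\<bar>) * ?D"
      unfolding eq by (intro norm_triangle_le add_mono norm_triangle_ineq n1 n2 n3)
    also have "\<dots> \<le> b1 * ?D" using D0 by (simp add: b1_def algebra_simps)
    finally show ?thesis by (simp add: algebra_simps)
  qed
  have Fdiff: "norm (F u t - F v t) \<le> dist u v / 2" for u v t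
  proof (cases "t \<ge> 0")
    case False
    thus ?thesis by (simp add: F_def)
  next
    case True
    have iu: "(integ G (X u) has_integral integral {0..t} (integ G (X u))) {0..t}" using hint by blast
    have iv: "(integ G (X v) has_integral integral {0..t} (integ G (X v))) {0..t}" using hint by blast
    have idiff: "((\<lambda>s. integ G (X u) s - integ G (X v) s) has_integral
        (integral {0..t} (integ G (X u)) - integral {0..t} (integ G (X v)))) {0..t}"
      by (rule has_integral_diff[OF iu iv])
    have gi: "((\<lambda>s. b1 * dist u v * exp (be * s) + 0) has_integral (b1 * dist u v * (exp (be * t) - 1) / be + 0 * t)) {0..t}"
      by (rule exp_integral[OF True be])
    have "norm (integral {0..t} (integ G (X u)) - integral {0..t} (integ G (X v))) \<le> b1 * dist u v * (exp (be * t) - 1) / be"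
    proof -
      have "norm (integral {0..t} (\<lambda>s. integ G (X u) s - integ G (X v) s)) \<le> integral {0..t} (\<lambda>s. b1 * dist u v * exp (be * s) + 0)"
        by (rule integral_norm_bound_integral) (use idiff gi hdiff in auto)
      thus ?thesis using integral_unique[OF idiff] integral_unique[OF gi] by simp
    qed
    also have "\<dots> \<le> dist u v / 2 * exp (be * t)"
    proof -
      have "b1 * dist u v * (exp (be * t) - 1) / be = dist u v / 2 * (exp (be * t) - 1)"
        using b1 by (simp add: be_def field_simps)
      also have "\<dots> \<le> dist u v / 2 * exp (be * t)" by (simp add: algebra_simps)
      finally show ?thesis .
    qed
    finally have *: "norm (integral {0..t} (integ G (X u)) - integral {0..t} (integ G (X v))) \<le> dist u v / 2 * exp (be * t)" .
    have "F u t - F v t = exp (- be * t) *\<^sub>R (integral {0..t} (integ G (X u)) - integral {0..t} (integ G (X v)))"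
      using True by (simp add: F_def algebra_simps)
    hence "norm (F u t - F v t) = exp (- be * t) * norm (integral {0..t} (integ G (X u)) - integral {0..t} (integ G (X v)))"
      by simp
    also have "\<dots> \<le> exp (- be * t) * (dist u v / 2 * exp (be * t))" using * by (intro mult_left_mono) auto
    also have "\<dots> = dist u v / 2" by (simp add: exp_minus field_simps)
    finally show ?thesis .
  qed
  have F0: "norm (F 0 t) \<le> norm z0 + norm (G 0) / be" for t
  proof -
    have X0: "X 0 = (\<lambda>_. 0)" by (simp add: X_def fun_eq_iff)
    have i0: "integ G (X 0) = (\<lambda>_. G 0)" by (simp add: X0 integ_def fun_eq_iff)
    have "F 0 t = exp (- be * max 0 t) *\<^sub>R z0 + (max 0 t * exp (- be * max 0 t)) *\<^sub>R G 0"
      by (simp add: F_def i0 algebra_simps)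
    hence "norm (F 0 t) \<le> exp (- be * max 0 t) * norm z0 + (max 0 t * exp (- be * max 0 t)) * norm (G 0)"
      by (metis (no_types, lifting) abs_of_nonneg exp_ge_zero max.cobounded1 mult_nonneg_nonneg norm_scaleR norm_triangle_ineq order_trans)
    also have "\<dots> \<le> 1 * norm z0 + (1 / be) * norm (G 0)"
      using exp_lin_bound[OF be, of "max 0 t"] be
      by (intro add_mono mult_right_mono) auto
    finally show ?thesis by simp
  qed
  have Fb: "F u \<in> bcontfun" for u
  proof (rule bcontfun_normI[OF Fc])
    fix t
    have "norm (F u t) \<le> norm (F 0 t) + norm (F u t - F 0 t)"
      using norm_triangle_ineq[of "F 0 t" "F u t - F 0 t"] by simp
    also have "\<dots> \<le> (norm z0 + norm (G 0) / be) + dist u 0 / 2" by (intro add_mono F0 Fdiff)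
    finally show "norm (F u t) \<le> (norm z0 + norm (G 0) / be) + dist u 0 / 2" .
  qed
  define Phi where "Phi u = Bcontfun (F u)" for u
  have Phi_app: "apply_bcontfun (Phi u) = F u" for u using Fb by (simp add: Phi_def Bcontfun_inverse)
  have "\<exists>!u. Phi u = u"
  proof (rule banach_fix_type[of "1/2"])
    show "\<forall>u v. dist (Phi u) (Phi v) \<le> 1 / 2 * dist u v"
    proof (intro allI)
      fix u v
      show "dist (Phi u) (Phi v) \<le> 1 / 2 * dist u v"
      proof (rule dist_bound)
        fix t
        show "dist (apply_bcontfun (Phi u) t) (apply_bcontfun (Phi v) t) \<le> 1 / 2 * dist u v"
          using Fdiff[of u t v] by (simp add: Phi_app dist_norm)
      qed
    qed
  qed auto
  then obtain u where u: "Phi u = u" by blast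
  have Fu: "F u t = apply_bcontfun u t" for t using u Phi_app by metis
  define z where "z = X u"
  have zt: "z t = z0 + integral {0..t} (integ G z)" if "t \<ge> 0" for t
  proof -
    have "z t = exp (be * t) *\<^sub>R F u t" using that by (simp add: z_def X_def Fu)
    also have "\<dots> = z0 + integral {0..t} (integ G z)" using that by (simp add: F_def z_def exp_minus)
    finally show ?thesis .
  qed
  have z0: "z 0 = z0" using zt[of 0] by simp
  have "zsol G {0..} z"
    unfolding zsol_def
  proof
    show "continuous_on {0..} z" using Xc by (auto simp: z_def intro: continuous_on_subset)
    show "\<forall>t\<in>{0..}. (integ G z has_integral z t - z 0) {0..t}"
      using zt z0 hint by (auto simp: z_def)
  qed
  thus ?thesis using z0 by blast
qed

end

lemma norm_mv_le: "norm ((A::real^'n^'m) *v x) \<le> (\<Sum>i\<in>UNIV. \<Sum>j\<in>UNIV. \<bar>A$i$j\<bar>) * norm x"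
proof -
  have "norm (A *v x) \<le> onorm ((*v) A) * norm x"
    by (rule onorm[OF matrix_vector_mul_bounded_linear])
  also have "\<dots> \<le> (\<Sum>i\<in>UNIV. \<Sum>j\<in>UNIV. \<bar>A$i$j\<bar>) * norm x"
    by (intro mult_right_mono onorm_le_matrix_component_sum) auto
  finally show ?thesis .
qed

lemma msum_nonneg: "(\<Sum>i\<in>UNIV. \<Sum>j\<in>UNIV. \<bar>(A::real^'n^'m)$i$j\<bar>) \<ge> 0"
  by (intro sum_nonneg) auto

lemma msum_le: "(\<Sum>i\<in>UNIV. \<Sum>j\<in>UNIV. \<bar>(A::real^2^2)$i$j\<bar>) \<le> 4 * norm A"
proof -
  have c: "\<bar>A$i$j\<bar> \<le> norm A" for i j
  proof -
    have "\<bar>A$i$j\<bar> \<le> norm (A$i)" by (rule component_le_norm_cart)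
    also have "\<dots> \<le> norm A" by (rule Finite_Cartesian_Product.norm_nth_le)
    finally show ?thesis .
  qed
  show ?thesis using c[of 1 1] c[of 1 2] c[of 2 1] c[of 2 2] by (simp add: sum_2)
qed

lemma mu_ctrl:
  assumes tau: "tau > 0" and lam: "lam \<noteq> 0" and z: "\<bar>zeta\<bar> < 1"
  shows "\<bar>exp (3 * lam * tau) + ctrl_k lam tau zeta * (1 - exp (lam * tau)) * tau * exp (lam * tau)\<bar> < 1"
proof (cases "lam < 0")
  case True
  hence "exp (3 * lam * tau) < 1" using tau by (simp add: mult_neg_pos)
  thus ?thesis using True by (simp add: ctrl_k_def)
next
  case False
  hence lp: "lam > 0" using lam by simp
  have e1: "exp (lam * tau) > 1" using lp tau by auto
  have "ctrl_k lam tau zeta * (1 - exp (lam * tau)) * tau * exp (lam * tau) = - (exp (3 * lam * tau) - zeta)"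
  proof -
    have ne: "exp (lam * tau) - 1 \<noteq> 0" using e1 by linarith
    have k: "ctrl_k lam tau zeta = exp (- lam * tau) * (exp (3 * lam * tau) - zeta) / (tau * (exp (lam * tau) - 1))"
      using lp by (simp add: ctrl_k_def ctrl_eps_def)
    have kt: "ctrl_k lam tau zeta * tau * exp (lam * tau) = (exp (3 * lam * tau) - zeta) / (exp (lam * tau) - 1)"
      unfolding k using ne tau by (simp add: exp_minus field_simps)
    have "ctrl_k lam tau zeta * (1 - exp (lam * tau)) * tau * exp (lam * tau)
       = (ctrl_k lam tau zeta * tau * exp (lam * tau)) * (1 - exp (lam * tau))" by (simp add: algebra_simps)
    also have "\<dots> = (exp (3 * lam * tau) - zeta) / (exp (lam * tau) - 1) * (1 - exp (lam * tau))"
      by (simp only: kt)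
    also have "\<dots> = - (exp (3 * lam * tau) - zeta)" using ne by (simp add: field_simps)
    finally show ?thesis .
  qed
  thus ?thesis using z by simp
qed

lemma G_lip:
  fixes f :: "real^2 \<Rightarrow> real^2" and Df :: "real^2 \<Rightarrow> real^2^2" and V Vi Dm :: "real^2^2"
  assumes S: "open S" "xs \<in> S"
    and deriv: "\<And>x. x \<in> S \<Longrightarrow> (f has_derivative (\<lambda>h. Df x *v h)) (at x)"
    and cont: "continuous_on S Df"
    and DmV: "V ** Df xs ** Vi = Dm"
    and e: "e > 0"
  shows "\<exists>r>0. \<forall>w1 w2. norm w1 \<le> r \<longrightarrow> norm w2 \<le> r \<longrightarrow>
     norm ((V *v f (xs + Vi *v w1) - Dm *v w1) - (V *v f (xs + Vi *v w2) - Dm *v w2)) \<le> e * norm (w1 - w2)"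
proof -
  define nV where "nV = (\<Sum>i\<in>UNIV. \<Sum>j\<in>UNIV. \<bar>V$i$j\<bar>)"
  define nVi where "nVi = (\<Sum>i\<in>UNIV. \<Sum>j\<in>UNIV. \<bar>Vi$i$j\<bar>)"
  have nV0: "nV \<ge> 0" "nVi \<ge> 0" unfolding nV_def nVi_def by (rule msum_nonneg)+
  define K0 where "K0 = 4 * nV * nVi + 1"
  have "0 \<le> 4 * nV * nVi" using nV0 by simp
  hence K0: "K0 > 0" "4 * nV * nVi \<le> K0" by (auto simp: K0_def)
  obtain d1 where d1: "d1 > 0" "\<And>p. p \<in> S \<Longrightarrow> dist p xs < d1 \<Longrightarrow> dist (Df p) (Df xs) < e / K0"
    using cont S(2) e K0 unfolding continuous_on_iff by (metis divide_pos_pos)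
  obtain d2 where d2: "d2 > 0" "ball xs d2 \<subseteq> S" using S open_contains_ball by blast
  define d where "d = min d1 d2"
  define r where "r = d / (2 * (nVi + 1))"
  have d: "d > 0" using d1 d2 by (simp add: d_def)
  have r: "r > 0" using d nV0 by (simp add: r_def)
  have inS: "xs + Vi *v w \<in> S \<and> dist (xs + Vi *v w) xs < d1" if "norm w \<le> r" for w
  proof -
    have "norm (Vi *v w) \<le> nVi * norm w" using norm_mv_le[of Vi w] by (simp add: nVi_def)
    also have "\<dots> \<le> nVi * r" using that nV0 by (intro mult_left_mono) auto
    also have "\<dots> < d"
    proof -
      have q: "nVi / (2 * (nVi + 1)) < 1" using nV0 by (simp add: field_simps)
      have "nVi * r = d * (nVi / (2 * (nVi + 1)))" by (simp add: r_def)
      also have "\<dots> < d * 1" by (rule mult_strict_left_mono[OF q d])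
      finally show ?thesis by simp
    qed
    finally have "norm (Vi *v w) < d" .
    hence "dist (xs + Vi *v w) xs < d" by (simp add: dist_norm)
    hence "dist (xs + Vi *v w) xs < d1" "dist xs (xs + Vi *v w) < d2" by (auto simp: d_def dist_commute)
    thus ?thesis using d2 by auto
  qed
  define G where "G w = V *v f (xs + Vi *v w) - Dm *v w" for w
  define G' where "G' w h = V *v (Df (xs + Vi *v w) *v (Vi *v h)) - Dm *v h" for w h
  have Gd: "(G has_derivative G' w) (at w within cball 0 r)" if w: "w \<in> cball 0 r" for w
  proof -
    have wS: "xs + Vi *v w \<in> S" using inS[of w] w by auto
    have a1: "((\<lambda>w. xs + Vi *v w) has_derivative (\<lambda>h. Vi *v h)) (at w)"
    proof -
      have "((*v) Vi has_derivative (*v) Vi) (at w)"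
        by (rule bounded_linear_imp_has_derivative) (rule matrix_vector_mul_bounded_linear)
      thus ?thesis by (auto intro!: derivative_eq_intros)
    qed
    have a2: "((f \<circ> (\<lambda>w. xs + Vi *v w)) has_derivative ((\<lambda>h. Df (xs + Vi *v w) *v h) \<circ> (\<lambda>h. Vi *v h))) (at w)"
      by (rule diff_chain_at[OF a1 deriv[OF wS]])
    have a3: "((\<lambda>w. V *v (f \<circ> (\<lambda>w. xs + Vi *v w)) w) has_derivative (\<lambda>h. V *v ((\<lambda>h. Df (xs + Vi *v w) *v h) \<circ> (\<lambda>h. Vi *v h)) h)) (at w)"
      by (rule bounded_linear.has_derivative[OF matrix_vector_mul_bounded_linear a2])
    have a4: "((\<lambda>w. Dm *v w) has_derivative (\<lambda>h. Dm *v h)) (at w)"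
      by (rule bounded_linear_imp_has_derivative[OF matrix_vector_mul_bounded_linear])
    have "(G has_derivative G' w) (at w)"
      using has_derivative_diff[OF a3 a4] unfolding G_def[abs_def] G'_def[abs_def] by (simp add: o_def)
    thus ?thesis by (rule has_derivative_at_withinI)
  qed
  have onb: "onorm (G' w) \<le> e" if w: "w \<in> cball 0 r" for w
  proof (rule onorm_le)
    fix h
    define P where "P = Df (xs + Vi *v w) - Df xs"
    have Peq: "G' w h = V *v (P *v (Vi *v h))"
    proof -
      have "Dm *v h = V *v (Df xs *v (Vi *v h))"
        by (simp add: DmV[symmetric] matrix_vector_mul_assoc matrix_mul_assoc)
      thus ?thesis by (simp add: G'_def P_def matrix_vector_mult_diff_rdistrib matrix_vector_mult_diff_distrib)
    qed
    have Pn: "norm P < e / K0" using d1(2)[of "xs + Vi *v w"] inS[of w] w by (simp add: P_def dist_norm)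
    have "norm (G' w h) \<le> nV * norm (P *v (Vi *v h))" unfolding Peq using norm_mv_le[of V] by (simp add: nV_def)
    also have "\<dots> \<le> nV * ((4 * norm P) * norm (Vi *v h))"
    proof (rule mult_left_mono[OF _ nV0(1)])
      have "(\<Sum>i\<in>UNIV. \<Sum>j\<in>UNIV. \<bar>P $ i $ j\<bar>) * norm (Vi *v h) \<le> 4 * norm P * norm (Vi *v h)"
        by (rule mult_right_mono[OF msum_le]) simp
      thus "norm (P *v (Vi *v h)) \<le> 4 * norm P * norm (Vi *v h)"
        using norm_mv_le[of P "Vi *v h"] by linarith
    qed
    also have "\<dots> \<le> nV * ((4 * norm P) * (nVi * norm h))"
      using norm_mv_le[of Vi h] nV0 by (intro mult_left_mono) (auto simp: nVi_def)
    also have "\<dots> = (4 * nV * nVi) * norm P * norm h" by (simp add: algebra_simps)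
    also have "\<dots> \<le> K0 * (e / K0) * norm h"
      using K0 Pn nV0 by (intro mult_right_mono mult_mono) auto
    also have "\<dots> = e * norm h" using K0 by simp
    finally show "norm (G' w h) \<le> e * norm h" .
  qed
  have "\<forall>w1 w2. norm w1 \<le> r \<longrightarrow> norm w2 \<le> r \<longrightarrow> norm (G w1 - G w2) \<le> e * norm (w1 - w2)"
  proof (intro allI impI)
    fix w1 w2 :: "real^2" assume "norm w1 \<le> r" "norm w2 \<le> r"
    thus "norm (G w1 - G w2) \<le> e * norm (w1 - w2)"
      by (intro differentiable_bound[OF convex_cball Gd onb]) auto
  qed
  thus ?thesis using r unfolding G_def by blast
qed

theorem mainTheorem1:
  fixes f :: "real^2 \<Rightarrow> real^2" and xs :: "real^2"
    and Df :: "real^2 \<Rightarrow> real^2^2" and S :: "(real^2) set"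
    and V :: "real^2^2" and lam1 lam2 tau zeta1 zeta2 :: real
  assumes eq: "f xs = 0"
    and S: "open S" "xs \<in> S"
    and deriv: "\<And>x. x \<in> S \<Longrightarrow> (f has_derivative (\<lambda>h. Df x *v h)) (at x)"
    and cont: "continuous_on S Df"
    and V: "invertible V"
    and A: "Df xs = matrix_inv V ** diag2 lam1 lam2 ** V"
    and lam: "lam1 \<noteq> 0" "lam2 \<noteq> 0" "lam1 > 0 \<or> lam2 > 0"
    and tau: "tau > 0"
    and zeta: "\<bar>zeta1\<bar> < 1" "\<bar>zeta2\<bar> < 1"
  shows "ctrl_loc_asym_stable f
           (matrix_inv V ** diag2 (ctrl_k lam1 tau zeta1) (ctrl_k lam2 tau zeta2) ** V) tau xs"
proof -
  define k1 where "k1 = ctrl_k lam1 tau zeta1"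
  define k2 where "k2 = ctrl_k lam2 tau zeta2"
  define Vi where "Vi = matrix_inv V"
  define Km where "Km = Vi ** diag2 k1 k2 ** V"
  define Dm where "Dm = diag2 lam1 lam2"
  have inv: "V ** Vi = mat 1" "Vi ** V = mat 1"
    using someI_ex[OF V[unfolded invertible_def]] by (auto simp: Vi_def matrix_inv_def)
  have ViV: "Vi *v (V *v v) = v" for v by (simp add: matrix_vector_mul_assoc inv)
  have VVi: "V *v (Vi *v v) = v" for v by (simp add: matrix_vector_mul_assoc inv)
  interpret per tau lam1 lam2 k1 k2 by standard (rule tau)
  have mus: "\<bar>mu lam1 k1\<bar> < 1" "\<bar>mu lam2 k2\<bar> < 1"
    using mu_ctrl[OF tau lam(1) zeta(1)] mu_ctrl[OF tau lam(2) zeta(2)]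
    by (simp_all add: mu_def k1_def k2_def mult.assoc)
  have DmV: "V ** Df xs ** Vi = Dm"
    by (simp add: A Dm_def Vi_def[symmetric] matrix_mul_assoc inv)
      (simp add: matrix_mul_assoc[symmetric] inv)
  define G where "G w = V *v f (xs + Vi *v w) - Dm *v w" for w
  have e0: "e0 > 0" using e0_pos[OF mus] .
  obtain r where r: "r > 0" and rL: "\<forall>w1 w2. norm w1 \<le> r \<longrightarrow> norm w2 \<le> r \<longrightarrow> norm (G w1 - G w2) \<le> e0 * norm (w1 - w2)"
    using G_lip[OF S deriv cont DmV e0] unfolding G_def by blast
  have G0: "G 0 = 0" using eq by (simp add: G_def)
  have Gb: "\<forall>w. norm w \<le> r \<longrightarrow> norm (G w) \<le> e0 * norm w"
    using rL r G0 by (metis diff_zero norm_zero order_less_imp_le)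
  have ident: "integ G (\<lambda>t. V *v (x t - xs)) s = V *v (f (x s) + ctrl_gain tau Km s *v (x (s - 2 * tau) - x (s - tau)))"
    for x :: "real \<Rightarrow> real^2" and s
  proof -
    have a: "xs + Vi *v (V *v (x s - xs)) = x s" by (simp add: ViV)
    have b: "V *v (Km *v w) = diag2 k1 k2 *v (V *v w)" for w
      by (simp add: Km_def matrix_vector_mul_assoc matrix_mul_assoc)
        (simp add: matrix_mul_assoc[symmetric] inv)
    have c: "V *v (x (s - 2 * tau) - xs) - V *v (x (s - tau) - xs) = V *v (x (s - 2 * tau) - x (s - tau))"
      by (simp add: matrix_vector_mult_diff_distrib)
    show ?thesis
      unfolding integ_def G_def ctrl_gain_chi a c
      by (simp add: Dm_def matrix_vector_right_distrib scaleR_matrix_vector_assoc[symmetric] b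
          matrix_vector_mult_scaleR)
  qed
  have transA: "zsol G I (\<lambda>t. V *v (x t - xs))" if xsol: "ctrl_solution_on f Km tau I x" for I x
    unfolding zsol_def
  proof
    show "continuous_on I (\<lambda>t. V *v (x t - xs))"
      using xsol by (auto simp: ctrl_solution_on_def intro!: continuous_intros)
    show "\<forall>t\<in>I. (integ G (\<lambda>t. V *v (x t - xs)) has_integral V *v (x t - xs) - V *v (x 0 - xs)) {0..t}"
    proof
      fix t assume t: "t \<in> I"
      have "((\<lambda>s. f (x s) + ctrl_gain tau Km s *v (x (s - 2 * tau) - x (s - tau))) has_integral (x t - x 0)) {0..t}"
        using xsol t by (simp add: ctrl_solution_on_def)
      from has_integral_linear[OF this matrix_vector_mul_bounded_linear[of V]]
      have h: "((\<lambda>s. V *v (f (x s) + ctrl_gain tau Km s *v (x (s - 2 * tau) - x (s - tau)))) has_integral V *v (x t - x 0)) {0..t}"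
        unfolding o_def .
      have e1: "integ G (\<lambda>t. V *v (x t - xs)) = (\<lambda>s. V *v (f (x s) + ctrl_gain tau Km s *v (x (s - 2 * tau) - x (s - tau))))"
        by (rule ext) (rule ident)
      have e2: "V *v (x t - xs) - V *v (x 0 - xs) = V *v (x t - x 0)"
        by (simp add: matrix_vector_mult_diff_distrib)
      show "(integ G (\<lambda>t. V *v (x t - xs)) has_integral V *v (x t - xs) - V *v (x 0 - xs)) {0..t}"
        unfolding e1 e2 by (rule h)
    qed
  qed
  have transB: "ctrl_solution_on f Km tau {0..} (\<lambda>t. xs + Vi *v z t)" if zs: "zsol G {0..} z" for z
  proof -
    let ?x = "\<lambda>t. xs + Vi *v z t"
    have zx: "(\<lambda>t. V *v (?x t - xs)) = z" by (simp add: VVi)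
    show ?thesis
      unfolding ctrl_solution_on_def
    proof
      show "continuous_on {0..} ?x" using zs by (auto simp: zsol_def intro!: continuous_intros)
      show "\<forall>t\<in>{0..}. ((\<lambda>s. f (?x s) + ctrl_gain tau Km s *v (?x (s - 2 * tau) - ?x (s - tau))) has_integral ?x t - ?x 0) {0..t}"
      proof
        fix t :: real assume t: "t \<in> {0..}"
        have "(integ G z has_integral z t - z 0) {0..t}" using zs t by (simp add: zsol_def)
        from has_integral_linear[OF this matrix_vector_mul_bounded_linear[of Vi]]
        have "((\<lambda>s. Vi *v integ G z s) has_integral Vi *v (z t - z 0)) {0..t}" by (simp add: o_def)
        moreover have "Vi *v integ G z s = f (?x s) + ctrl_gain tau Km s *v (?x (s - 2 * tau) - ?x (s - tau))" for s
          using ident[of ?x s] unfolding zx by (simp add: ViV)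
        ultimately show "((\<lambda>s. f (?x s) + ctrl_gain tau Km s *v (?x (s - 2 * tau) - ?x (s - tau))) has_integral ?x t - ?x 0) {0..t}"
          by (simp add: matrix_vector_mult_diff_distrib)
      qed
    qed
  qed
  have bound: "(\<forall>t\<in>I. norm (V *v (x t - xs)) \<le> CC * norm (V *v (x 0 - xs)))
      \<and> (\<forall>s\<in>I. norm (G (V *v (x s - xs))) \<le> e0 * norm (V *v (x s - xs)))"
    if I: "iseg I" and xsol: "ctrl_solution_on f Km tau I x" and small: "CC * norm (V *v (x 0 - xs)) < r" for I x
  proof -
    have zs: "zsol G I (\<lambda>t. V *v (x t - xs))" by (rule transA[OF xsol])
    have "\<forall>t\<in>I. norm (V *v (x t - xs)) < r"
      using ball_bound[OF mus zs I Gb _ order_refl] e0 small by auto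
    hence Gb': "\<forall>s\<in>I. norm (G (V *v (x s - xs))) \<le> e0 * norm (V *v (x s - xs))"
      using Gb by auto
    thus ?thesis using apriori_C[OF mus zs I Gb' _ order_refl] e0 by auto
  qed
  define nV where "nV = (\<Sum>i\<in>UNIV. \<Sum>j\<in>UNIV. \<bar>V$i$j\<bar>)"
  define nVi where "nVi = (\<Sum>i\<in>UNIV. \<Sum>j\<in>UNIV. \<bar>Vi$i$j\<bar>)"
  have nV0: "nV \<ge> 0" "nVi \<ge> 0" unfolding nV_def nVi_def by (rule msum_nonneg)+
  have nVb: "norm (V *v v) \<le> nV * norm v" for v using norm_mv_le[of V v] by (simp add: nV_def)
  have nVib: "norm (Vi *v v) \<le> nVi * norm v" for v using norm_mv_le[of Vi v] by (simp add: nVi_def)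
  have CC1: "CC \<ge> 1" by (rule CC_ge)
  have xback: "x t = xs + Vi *v (V *v (x t - xs))" for x :: "real \<Rightarrow> real^2" and t by (simp add: ViV)
  have zsmall: "(CC + 1) * (nVi + 1) * norm (V *v (x0 - xs)) < m"
    if "norm (x0 - xs) < m / ((CC + 1) * (nV + 1) * (nVi + 1))" "m > 0" for x0 m
  proof -
    have P: "(CC + 1) * (nVi + 1) > 0" "(nV + 1) > 0" using CC1 nV0 by auto
    have "norm (V *v (x0 - xs)) \<le> nV * norm (x0 - xs)" by (rule nVb)
    also have "\<dots> \<le> (nV + 1) * norm (x0 - xs)" by (intro mult_right_mono) auto
    also have "\<dots> < (nV + 1) * (m / ((CC + 1) * (nV + 1) * (nVi + 1)))"
      using that P by (intro mult_strict_left_mono) auto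
    also have "\<dots> = m / ((CC + 1) * (nVi + 1))"
    proof -
      define Q where "Q = (CC + 1) * (nVi + 1)"
      have Q: "Q > 0" using P by (simp add: Q_def)
      have den: "(CC + 1) * (nV + 1) * (nVi + 1) = (nV + 1) * Q" by (simp add: Q_def algebra_simps)
      have "m / ((nV + 1) * Q) = (m / Q) / (nV + 1)" by (simp add: divide_divide_eq_left mult.commute)
      moreover have "(nV + 1) * ((m / Q) / (nV + 1)) = m / Q" using P(2) by simp
      ultimately show ?thesis unfolding den Q_def[symmetric] by simp
    qed
    finally have "norm (V *v (x0 - xs)) < m / ((CC + 1) * (nVi + 1))" .
    thus ?thesis using P by (simp add: pos_less_divide_eq mult.commute)
  qed
  have CCle: "CC * a \<le> (CC + 1) * (nVi + 1) * a" if "a \<ge> 0" for a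
  proof -
    have "CC \<le> (CC + 1) * (nVi + 1)" using nV0 CC1 by (simp add: algebra_simps)
    thus ?thesis using that by (intro mult_right_mono) auto
  qed
  have nViCCle: "nVi * (CC * a) \<le> (CC + 1) * (nVi + 1) * a" if "a \<ge> 0" for a
  proof -
    have "nVi * CC \<le> (CC + 1) * (nVi + 1)" using nV0 CC1 by (simp add: algebra_simps)
    thus ?thesis using that by (simp add: mult.assoc[symmetric]) (intro mult_right_mono, auto)
  qed
  have stab: "\<exists>delta>0. \<forall>x0. norm (x0 - xs) < delta \<longrightarrow>
        (\<exists>x. ctrl_solution_on f Km tau {0..} x \<and> x 0 = x0) \<and>
        (\<forall>T x. ctrl_solution_on f Km tau {0..<T} x \<and> x 0 = x0 \<longrightarrow>
                (\<forall>t\<in>{0..<T}. norm (x t - xs) < eta)) \<and>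
        (\<forall>x. ctrl_solution_on f Km tau {0..} x \<and> x 0 = x0 \<longrightarrow>
                (\<forall>t\<ge>0. norm (x t - xs) < eta))" if eta: "eta > 0" for eta
  proof -
    define m where "m = min r eta"
    have m: "m > 0" "m \<le> r" "m \<le> eta" using r eta by (auto simp: m_def)
    define delta where "delta = m / ((CC + 1) * (nV + 1) * (nVi + 1))"
    have delta: "delta > 0" using m CC1 nV0 by (simp add: delta_def)
    show ?thesis
    proof (rule exI[of _ delta], rule conjI[OF delta], rule allI, rule impI)
      fix x0 assume x0: "norm (x0 - xs) < delta"
      define z0 where "z0 = V *v (x0 - xs)"
      have zs0: "(CC + 1) * (nVi + 1) * norm z0 < m" unfolding z0_def
        by (rule zsmall[OF x0[unfolded delta_def] m(1)])
      have CCz: "CC * norm z0 < r" using CCle[of "norm z0"] zs0 m by simp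
      have gen: "norm (x t - xs) < eta" if I: "iseg I" and xsol: "ctrl_solution_on f Km tau I x" and x00: "x 0 = x0"
          and t: "t \<in> I" for I x t
      proof -
        have b: "norm (V *v (x t - xs)) \<le> CC * norm z0"
          using bound[OF I xsol] CCz t x00 by (simp add: z0_def)
        have "norm (x t - xs) = norm (Vi *v (V *v (x t - xs)))" by (simp add: ViV)
        also have "\<dots> \<le> nVi * norm (V *v (x t - xs))" by (rule nVib)
        also have "\<dots> \<le> nVi * (CC * norm z0)" using b nV0 by (intro mult_left_mono) auto
        also have "\<dots> \<le> (CC + 1) * (nVi + 1) * norm z0" by (rule nViCCle) simp
        also have "\<dots> < eta" using zs0 m by simp
        finally show ?thesis .
      qed
      have P2: "\<forall>T x. ctrl_solution_on f Km tau {0..<T} x \<and> x 0 = x0 \<longrightarrow> (\<forall>t\<in>{0..<T}. norm (x t - xs) < eta)"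
      proof (intro allI impI ballI)
        fix T x t assume h: "ctrl_solution_on f Km tau {0..<T} x \<and> x 0 = x0" and t: "t \<in> {0..<T}"
        have "iseg {0..<T}" by (auto simp: iseg_def)
        thus "norm (x t - xs) < eta" using gen h t by blast
      qed
      have P3: "\<forall>x. ctrl_solution_on f Km tau {0..} x \<and> x 0 = x0 \<longrightarrow> (\<forall>t\<ge>0. norm (x t - xs) < eta)"
      proof (intro allI impI)
        fix x t assume h: "ctrl_solution_on f Km tau {0..} x \<and> x 0 = x0" and t: "t \<ge> (0::real)"
        have "iseg {0..}" by (auto simp: iseg_def)
        thus "norm (x t - xs) < eta" using gen h t by auto
      qed
      define C0 where "C0 = cball (0::real^2) r"
      have C0: "convex C0" "closed C0" "C0 \<noteq> {}" using r by (auto simp: C0_def)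
      define Gt where "Gt w = G (closest_point C0 w)" for w
      have cpin: "norm (closest_point C0 w) \<le> r" for w
        using closest_point_in_set[OF C0(2,3)] by (auto simp: C0_def)
      have GtL: "norm (Gt x - Gt y) \<le> e0 * norm (x - y)" for x y
      proof -
        have "norm (Gt x - Gt y) \<le> e0 * norm (closest_point C0 x - closest_point C0 y)"
          using rL cpin by (simp add: Gt_def)
        also have "\<dots> \<le> e0 * norm (x - y)"
          using closest_point_lipschitz[OF C0, of x y] e0 by (intro mult_left_mono) (auto simp: dist_norm)
        finally show ?thesis .
      qed
      have Gt_eq: "Gt w = G w" if "norm w \<le> r" for w
        using that closest_point_self[of w C0] by (simp add: Gt_def C0_def)
      have Gt0: "Gt 0 = 0" using Gt_eq[of 0] r G0 by simp
      have Gtb: "\<forall>w. norm w \<le> r \<longrightarrow> norm (Gt w) \<le> e0 * norm w"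
        using GtL[of _ 0] Gt0 by simp
      obtain z where zs: "zsol Gt {0..} z" and z0: "z 0 = z0"
        using existence[OF GtL, of z0] e0 by auto
      have zr: "\<forall>t\<in>{0..}. norm (z t) < r"
        using ball_bound[OF mus zs _ Gtb _ order_refl] e0 CCz z0 by (auto simp: iseg_def)
      have zsG: "zsol G {0..} z"
        unfolding zsol_def
      proof
        show "continuous_on {0..} z" using zs by (simp add: zsol_def)
        show "\<forall>t\<in>{0..}. (integ G z has_integral z t - z 0) {0..t}"
        proof
          fix t :: real assume t: "t \<in> {0..}"
          have "(integ Gt z has_integral z t - z 0) {0..t}" using zs t by (simp add: zsol_def)
          thus "(integ G z has_integral z t - z 0) {0..t}"
            by (rule has_integral_eq[rotated]) (use zr Gt_eq in \<open>auto simp: integ_def less_imp_le\<close>)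
        qed
      qed
      have P1: "\<exists>x. ctrl_solution_on f Km tau {0..} x \<and> x 0 = x0"
        using transB[OF zsG] z0 by (intro exI[of _ "\<lambda>t. xs + Vi *v z t"]) (simp add: z0_def ViV)
      show "(\<exists>x. ctrl_solution_on f Km tau {0..} x \<and> x 0 = x0) \<and>
        (\<forall>T x. ctrl_solution_on f Km tau {0..<T} x \<and> x 0 = x0 \<longrightarrow>
                (\<forall>t\<in>{0..<T}. norm (x t - xs) < eta)) \<and>
        (\<forall>x. ctrl_solution_on f Km tau {0..} x \<and> x 0 = x0 \<longrightarrow>
                (\<forall>t\<ge>0. norm (x t - xs) < eta))" using P1 P2 P3 by blast
    qed
  qed
  have attr: "\<exists>delta0>0. \<forall>x. ctrl_solution_on f Km tau {0..} x \<and> norm (x 0 - xs) < delta0 \<longrightarrow>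
        (x \<longlongrightarrow> xs) at_top"
  proof (intro exI[of _ "r / ((CC + 1) * (nV + 1) * (nVi + 1))"] conjI allI impI)
    show "r / ((CC + 1) * (nV + 1) * (nVi + 1)) > 0" using r CC1 nV0 by simp
    fix x assume x: "ctrl_solution_on f Km tau {0..} x \<and> norm (x 0 - xs) < r / ((CC + 1) * (nV + 1) * (nVi + 1))"
    have I: "iseg {0..}" by (auto simp: iseg_def)
    have zsm: "(CC + 1) * (nVi + 1) * norm (V *v (x 0 - xs)) < r" using zsmall[of "x 0" r] x r by simp
    have CCz: "CC * norm (V *v (x 0 - xs)) < r" using CCle[of "norm (V *v (x 0 - xs))"] zsm by simp
    have zs: "zsol G {0..} (\<lambda>t. V *v (x t - xs))" using transA x by blast
    have Gb': "\<forall>s\<in>{0..}. norm (G (V *v (x s - xs))) \<le> e0 * norm (V *v (x s - xs))"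
    proof -
      have xs': "ctrl_solution_on f Km tau {0..} x" using x by blast
      show ?thesis using bound[OF I xs' CCz] by blast
    qed
    have "((\<lambda>t. V *v (x t - xs)) \<longlongrightarrow> 0) at_top"
      by (rule apriori_lim[OF mus zs Gb' _ order_refl]) (use e0 in auto)
    hence "((\<lambda>t. xs + Vi *v (V *v (x t - xs))) \<longlongrightarrow> xs + Vi *v 0) at_top"
      by (intro tendsto_intros bounded_linear.tendsto[OF matrix_vector_mul_bounded_linear])
    thus "(x \<longlongrightarrow> xs) at_top" by (simp add: ViV)
  qed
  show ?thesis unfolding ctrl_loc_asym_stable_def Km_def[symmetric] k1_def[symmetric] k2_def[symmetric] Vi_def[symmetric]
    using stab attr by blast
qed

end
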